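(* Let $e\ge4$, let $I\subseteq\mathbb Z$ be a union of $c$ congruence classes modulo $e$ with $2\le c\le e-2$, put $\bar c=e-c$, and fix $u$ with $0\le u\le n$. Suppose $\nu$ is an $I$-separated $(u,I)$-partition such that $\nu_{\bar I}$ is not $\bar c$-restricted, and let $s\ge1$ be minimal with $(\nu_{\bar I})_s-(\nu_{\bar I})_{s+1}\ge\bar c$. Let $\tau$ be the partition with $\tau_r=(\nu_{\bar I})_r-\bar c$ for $r\le s$ and $\tau_r=(\nu_{\bar I})_r$ for $r>s$ (so $\nu_{\bar I}=(1^s)\,\|_{\bar c}\,\tau$). Define the $(u,I)$-partition $\xi$ by $\xi_I=(s)\,\|_c\,\nu_I$ (the partition whose parts are the parts of $\nu_I$ together with $c$ copies of $s$) and $\xi_{\bar I}=\tau$. Then $\nu$ and $\xi$ are $(e,\bar c)$-equivalent.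
   Context: $\bar I=\mathbb Z\setminus I$. Fix a large integer $n$ divisible by $e$; abacus displays have $n$ beads: the display of $\lambda$ is the set of occupied positions $\{\lambda_r+r-1:1\le r\le n\}\subseteq\mathbb Z_{\ge0}$, and a set of $N$ occupied positions $b_1>\dots>b_N$ determines the partition with parts $b_r+r-N$. Discarding positions not in $I$ and relabelling the rest $0,1,2,\dots$ in increasing order gives the display of a partition $\lambda_I$; discarding positions in $I$ gives $\lambda_{\bar I}$. $\lambda$ is a $(u,I)$-partition if exactly $u$ of its $n$ beads lie in positions in $I$; such a partition is determined by $(\lambda_I,\lambda_{\bar I})$, and any pair of partitions arises. $\lambda$ is $I$-separated if the first empty position in $I$ comes after the last occupied position in $\bar I$. For partitions $\alpha,\beta$: $\alpha\,\|_{\bar c}\,\beta=(\bar c\alpha_1+\beta_1,\bar c\alpha_2+\beta_2,\dots)$, and $\alpha\,\|_c\,\beta$ is the partition formed by the parts of $\beta$ together with $c$ copies of each part of $\alpha$, in decreasing order. A partition is $k$-restricted if $\lambda_r-\lambda_{r+1}<k$ for all $r$. $(e,\bar c)$-ladders are the sets $\{(r+k(\bar c-e),c'+k\bar c):k\in\mathbb Z\}$ for $(r,c')\in\mathbb Z^2$, and two partitions are $(e,\bar c)$-equivalent if they have the same number of nodes in every $(e,\bar c)$-ladder. *)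

theory Defs
  imports Main
begin

definition is_partition :: "nat list \<Rightarrow> bool" where
  "is_partition xs \<longleftrightarrow> sorted_wrt (\<ge>) xs \<and> 0 \<notin> set xs"

definition part :: "nat list \<Rightarrow> nat \<Rightarrow> nat" where
  "part xs r = (if 1 \<le> r \<and> r \<le> length xs then xs ! (r - 1) else 0)"

definition union_of_classes :: "nat \<Rightarrow> nat \<Rightarrow> int set \<Rightarrow> bool" where
  "union_of_classes e c I \<longleftrightarrow>
     (\<exists>C. C \<subseteq> {0..<int e} \<and> card C = c \<and> I = {x. x mod int e \<in> C})"

definition display :: "nat \<Rightarrow> nat list \<Rightarrow> nat set" where
  "display n xs = {part xs r + (n - r) | r. 1 \<le> r \<and> r \<le> n}"

text \<open>Partition determined by a finite set of occupied positions b_1 > ... > b_N: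
  parts b_r + r - N.\<close>
definition partition_of :: "nat set \<Rightarrow> nat list" where
  "partition_of B = (let N = card B; bs = rev (sorted_list_of_set B) in
      filter (\<lambda>x. 0 < x) (map (\<lambda>r. (bs ! (r - 1) + r) - N) [1..<N + 1]))"

definition relabel :: "int set \<Rightarrow> nat \<Rightarrow> nat" where
  "relabel J p = card {q::nat. q < p \<and> int q \<in> J}"

definition sub_part :: "nat \<Rightarrow> int set \<Rightarrow> nat list \<Rightarrow> nat list" where
  "sub_part n J xs = partition_of (relabel J ` {p \<in> display n xs. int p \<in> J})"

definition I_part :: "nat \<Rightarrow> int set \<Rightarrow> nat list \<Rightarrow> nat list" where
  "I_part n I xs = sub_part n I xs"

definition comp_part :: "nat \<Rightarrow> int set \<Rightarrow> nat list \<Rightarrow> nat list" where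
  "comp_part n I xs = sub_part n (- I) xs"

definition uI_partition :: "nat \<Rightarrow> int set \<Rightarrow> nat \<Rightarrow> nat list \<Rightarrow> bool" where
  "uI_partition n I u xs \<longleftrightarrow> is_partition xs \<and> length xs \<le> n \<and>
     card {p \<in> display n xs. int p \<in> I} = u"

definition I_separated :: "nat \<Rightarrow> int set \<Rightarrow> nat list \<Rightarrow> bool" where
  "I_separated n I xs \<longleftrightarrow>
     (\<forall>p q. p \<in> display n xs \<and> int p \<notin> I \<and> int q \<in> I \<and> q \<notin> display n xs \<longrightarrow> p < q)"

definition restricted :: "nat \<Rightarrow> nat list \<Rightarrow> bool" where
  "restricted k xs \<longleftrightarrow> (\<forall>r\<ge>1. part xs r - part xs (Suc r) < k)"

definition copies_join :: "nat \<Rightarrow> nat list \<Rightarrow> nat list \<Rightarrow> nat list" where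
  "copies_join c alpha beta = rev (sort (concat (map (replicate c) alpha) @ beta))"

definition tau_of :: "nat \<Rightarrow> nat \<Rightarrow> nat list \<Rightarrow> nat list" where
  "tau_of cb s xs = filter (\<lambda>x. 0 < x)
     (map (\<lambda>r. if r \<le> s then part xs r - cb else part xs r) [1..<length xs + 1])"

definition nodes :: "nat list \<Rightarrow> (int \<times> int) set" where
  "nodes xs = {(int r, int j) | r j. 1 \<le> r \<and> r \<le> length xs \<and> 1 \<le> j \<and> j \<le> part xs r}"

definition ladder :: "nat \<Rightarrow> nat \<Rightarrow> int \<Rightarrow> int \<Rightarrow> (int \<times> int) set" where
  "ladder e cb r c' = {(r + k * (int cb - int e), c' + k * int cb) | k. True}"

definition ladder_equiv :: "nat \<Rightarrow> nat \<Rightarrow> nat list \<Rightarrow> nat list \<Rightarrow> bool" where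
  "ladder_equiv e cb xs ys \<longleftrightarrow>
     (\<forall>r c'. card (nodes xs \<inter> ladder e cb r c') = card (nodes ys \<inter> ladder e cb r c'))"

end

theory Submission
  imports Defs "HOL-Library.Multiset"
begin


definition cnt :: "(nat \<Rightarrow> bool) \<Rightarrow> nat \<Rightarrow> nat" where
  "cnt P x = card {y. y < x \<and> P y}"

lemma cnt_0[simp]: "cnt P 0 = 0" by (simp add: cnt_def)

lemma cnt_Suc: "cnt P (Suc x) = cnt P x + (if P x then 1 else 0)"
proof -
  have "{y. y < Suc x \<and> P y} = {y. y < x \<and> P y} \<union> (if P x then {x} else {})"
    by (auto simp: less_Suc_eq)
  then show ?thesis unfolding cnt_def by (auto simp: card_insert_if)
qed

lemma cnt_mono: "x \<le> y \<Longrightarrow> cnt P x \<le> cnt P y"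
  unfolding cnt_def by (rule card_mono) auto

lemma cnt_strict: "x < y \<Longrightarrow> P x \<Longrightarrow> cnt P x < cnt P y"
proof -
  assume "x < y" "P x"
  have "cnt P (Suc x) \<le> cnt P y" using \<open>x<y\<close> by (intro cnt_mono) simp
  then show ?thesis using \<open>P x\<close> by (simp add: cnt_Suc)
qed

lemma cnt_inj: "P x \<Longrightarrow> P y \<Longrightarrow> cnt P x = cnt P y \<Longrightarrow> x = y"
  by (metis cnt_strict less_irrefl linorder_neqE_nat)

lemma cnt_interval: "x \<le> y \<Longrightarrow> card {z. x \<le> z \<and> z < y \<and> P z} = cnt P y - cnt P x"
proof -
  assume "x \<le> y"
  have "{z. z < y \<and> P z} = {z. z < x \<and> P z} \<union> {z. x \<le> z \<and> z < y \<and> P z}" using \<open>x \<le> y\<close> by auto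
  moreover have "card ({z. z < x \<and> P z} \<union> {z. x \<le> z \<and> z < y \<and> P z}) = cnt P x + card {z. x \<le> z \<and> z < y \<and> P z}"
    unfolding cnt_def by (subst card_Un_disjoint) auto
  ultimately show ?thesis unfolding cnt_def by simp
qed

lemma cnt_periodic:
  assumes "\<And>x. P (x + e) = P x"
  shows "cnt P (x + e) = cnt P x + cnt P e"
  by (induction x) (auto simp: cnt_Suc assms[of 0, simplified] assms)

lemma cnt_surj:
  assumes "\<And>m. \<exists>x\<ge>m. P x"
  shows "\<exists>x. P x \<and> cnt P x = k"
proof -
  have ex: "\<exists>y. k < cnt P y"
  proof (induction k)
    case 0
    obtain x where "P x" using assms by blast
    then have "cnt P x < cnt P (Suc x)" using cnt_strict[of x "Suc x" P] by simp
    then show ?case by (intro exI[of _ "Suc x"]) simp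
  next
    case (Suc k)
    then obtain y where "k < cnt P y" by blast
    obtain x where "x \<ge> y" "P x" using assms by blast
    then have "cnt P y \<le> cnt P x" by (simp add: cnt_mono)
    moreover have "cnt P x < cnt P (Suc x)" using \<open>P x\<close> by (simp add: cnt_Suc)
    ultimately show ?case using \<open>k < cnt P y\<close> by (intro exI[of _ "Suc x"]) simp
  qed
  define y where "y = (LEAST y. k < cnt P y)"
  have y1: "k < cnt P y" unfolding y_def using ex by (metis LeastI_ex)
  have "y \<noteq> 0" using y1 by (metis cnt_0 not_less_zero)
  then obtain z where z: "y = Suc z" by (cases y) auto
  have "\<not> k < cnt P z" using z unfolding y_def by (metis Least_le lessI not_le y_def)
  with y1 z show ?thesis by (auto simp: cnt_Suc split: if_splits intro!: exI[of _ z])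
qed


lemma part_Cons_1[simp]: "part (x#xs) (Suc 0) = x" by (simp add: Defs.part_def)
lemma part_Cons_Suc: "1 \<le> r \<Longrightarrow> part (x#xs) (Suc r) = part xs r" by (simp add: Defs.part_def)
lemma part_0[simp]: "part xs 0 = 0" by (simp add: Defs.part_def)

lemma filter_part:
  "sorted_wrt (\<ge>) (L::nat list) \<Longrightarrow>
   part (filter (\<lambda>x. 0 < x) L) r = (if 1 \<le> r \<and> r \<le> length L then L!(r-1) else 0)"
proof (induction L arbitrary: r)
  case Nil then show ?case by (simp add: Defs.part_def)
next
  case (Cons x L)
  then have sL: "sorted_wrt (\<ge>) L" and le: "\<forall>y\<in>set L. y \<le> x" by auto
  show ?case
  proof (cases "x = 0")
    case True
    then have "\<forall>y\<in>set L. y = 0" using le by auto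
    then have f: "filter (\<lambda>x. 0 < x) (x#L) = []" using True by (auto simp: filter_empty_conv)
    show ?thesis
    proof (cases r)
      case 0 then show ?thesis by (simp add: f)
    next
      case (Suc r') then show ?thesis using True \<open>\<forall>y\<in>set L. y = 0\<close> f
        by (auto simp: Defs.part_def nth_Cons split: nat.splits)
    qed
  next
    case False
    then have f: "filter (\<lambda>x. 0 < x) (x#L) = x # filter (\<lambda>x. 0 < x) L" by simp
    show ?thesis
    proof (cases r)
      case 0 then show ?thesis by simp
    next
      case (Suc r')
      show ?thesis
      proof (cases r')
        case 0 then show ?thesis using Suc f by simp
      next
        case (Suc r'')
        then show ?thesis using \<open>r = Suc r'\<close> f Cons.IH[OF sL, of r'] by (simp add: part_Cons_Suc)
      qed
    qed
  qed
qed

lemma part_mono: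
  assumes "is_partition xs" "1 \<le> r" "r \<le> r'"
  shows "part xs r' \<le> part xs r"
proof (cases "r' \<le> length xs")
  case True
  show ?thesis
  proof (cases "r = r'")
    case False
    then have "xs!(r-1) \<ge> xs!(r'-1)" using assms True
      by (intro sorted_wrt_nth_less[where P="(\<ge>)"]) (auto simp: is_partition_def)
    then show ?thesis using True assms by (simp add: Defs.part_def)
  qed simp
next
  case False then show ?thesis by (simp add: Defs.part_def)
qed

lemma part_pos: "is_partition xs \<Longrightarrow> 1 \<le> r \<Longrightarrow> r \<le> length xs \<Longrightarrow> 0 < part xs r"
proof -
  assume a: "is_partition xs" "1 \<le> r" "r \<le> length xs"
  then have "xs!(r-1) \<in> set xs" by simp
  then have "xs!(r-1) \<noteq> 0" using a(1) unfolding is_partition_def by metis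
  then show ?thesis using a by (simp add: Defs.part_def)
qed



definition bsl :: "nat set \<Rightarrow> nat list" where "bsl B = rev (sorted_list_of_set B)"

definition gb :: "nat set \<Rightarrow> nat \<Rightarrow> nat" where "gb B b = b - card {x\<in>B. x < b}"

lemma card_below_le: "card {x\<in>B. x < (b::nat)} \<le> b"
proof -
  have "card {x\<in>B. x < b} \<le> card {..<b}" by (rule card_mono) auto
  then show ?thesis by simp
qed

lemma gb_mono: assumes "finite B" "b' \<le> b" shows "gb B b' \<le> gb B b"
proof -
  have "{x\<in>B. x < b} \<subseteq> {x\<in>B. x < b'} \<union> {b'..<b}" by auto
  then have "card {x\<in>B. x < b} \<le> card ({x\<in>B. x < b'} \<union> {b'..<b})" by (intro card_mono) (auto simp: assms)
  also have "\<dots> \<le> card {x\<in>B. x < b'} + card {b'..<b}" by (rule card_Un_le)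
  finally have "card {x\<in>B. x < b} \<le> card {x\<in>B. x < b'} + (b - b')" by simp
  then show ?thesis unfolding gb_def using card_below_le[of B b'] assms by linarith
qed

lemma sl_index:
  assumes "finite B" "i < card B"
  shows "card {x\<in>B. x < sorted_list_of_set B ! i} = i"
proof -
  let ?xs = "sorted_list_of_set B"
  have st: "sorted_wrt (<) ?xs" by simp
  have len: "length ?xs = card B" by simp
  have "{x\<in>B. x < ?xs ! i} = set (take i ?xs)"
  proof
    show "{x \<in> B. x < ?xs ! i} \<subseteq> set (take i ?xs)"
    proof
      fix x assume "x \<in> {x \<in> B. x < ?xs ! i}"
      then have "x \<in> set ?xs" "x < ?xs!i" using assms by auto
      then obtain j where j: "j < length ?xs" "?xs!j = x" by (auto simp: in_set_conv_nth)
      have "j < i"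
      proof (rule ccontr)
        assume "\<not> j < i"
        then have "i \<le> j" by simp
        then have "?xs!i \<le> ?xs!j" using j st by (metis sorted_iff_nth_mono strict_sorted_iff)
        then show False using j \<open>x < ?xs!i\<close> by simp
      qed
      then show "x \<in> set (take i ?xs)" using j by (auto simp: in_set_conv_nth intro!: exI[of _ j])
    qed
  next
    show "set (take i ?xs) \<subseteq> {x \<in> B. x < ?xs ! i}"
    proof
      fix x assume "x \<in> set (take i ?xs)"
      then obtain j where j: "j < i" "?xs!j = x" using assms len by (auto simp: in_set_conv_nth)
      then have "x < ?xs!i" using st assms len by (metis sorted_wrt_nth_less)
      moreover have "x \<in> B" using j assms len by (metis \<open>x \<in> set (take i ?xs)\<close> in_set_takeD set_sorted_list_of_set)
      ultimately show "x \<in> {x \<in> B. x < ?xs ! i}" by simp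
    qed
  qed
  moreover have "distinct (take i ?xs)" by simp
  ultimately show ?thesis using assms len by (simp add: distinct_card min_def)
qed



lemma bsl_index:
  assumes "finite B" "i < card B"
  shows "card {x\<in>B. x < bsl B ! i} = card B - 1 - i"
  using sl_index[OF assms(1), of "card B - 1 - i"] assms by (simp add: bsl_def rev_nth)

lemma bsl_len[simp]: "finite B \<Longrightarrow> length (bsl B) = card B" by (simp add: bsl_def)
lemma bsl_set[simp]: "finite B \<Longrightarrow> set (bsl B) = B" by (simp add: bsl_def)
lemma bsl_mset: "finite B \<Longrightarrow> mset (bsl B) = mset_set B" by (metis bsl_def mset_rev mset_sorted_list_of_multiset sorted_list_of_mset_set)
lemma bsl_sorted: "sorted_wrt (\<ge>) (bsl B)"
  by (simp add: bsl_def sorted_wrt_rev)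



lemma partition_of_alt:
  assumes "finite B"
  shows "partition_of B = filter (\<lambda>x. 0 < x) (map (gb B) (bsl B))"
proof -
  let ?N = "card B"
  have "map (\<lambda>r. (bsl B ! (r - 1) + r) - ?N) [1..<?N + 1] = map (gb B) (bsl B)"
  proof (rule nth_equalityI)
    fix i assume "i < length (map (\<lambda>r. (bsl B ! (r - 1) + r) - ?N) [1..<?N + 1])"
    then have i: "i < ?N" by (simp del: upt_Suc)
    have "bsl B ! i \<ge> card {x\<in>B. x < bsl B ! i}" by (rule card_below_le)
    then show "map (\<lambda>r. (bsl B ! (r - 1) + r) - ?N) [1..<?N + 1] ! i = map (gb B) (bsl B) ! i"
      using i bsl_index[OF assms i] assms by (simp add: gb_def nth_upt del: upt_Suc)
  qed (simp add: assms del: upt_Suc)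
  then show ?thesis unfolding partition_of_def Let_def bsl_def[symmetric] by simp
qed

lemma map_gb_sorted: assumes "finite B" shows "sorted_wrt (\<ge>) (map (gb B) (bsl B))"
proof -
  have "sorted_wrt (\<lambda>x y. gb B y \<le> gb B x) (bsl B)"
    by (rule sorted_wrt_mono_rel[OF _ bsl_sorted]) (simp add: gb_mono assms)
  then show ?thesis by (simp add: sorted_wrt_map)
qed

lemma partition_of_is_partition: "finite B \<Longrightarrow> is_partition (partition_of B)"
  unfolding is_partition_def by (simp add: partition_of_alt sorted_wrt_filter map_gb_sorted)

lemma partition_of_length: "finite B \<Longrightarrow> length (partition_of B) \<le> card B"
  by (simp add: partition_of_alt) (metis bsl_len length_filter_le length_map)

lemma partition_of_mset:
  "finite B \<Longrightarrow> mset (partition_of B) = filter_mset (\<lambda>x. 0 < x) (image_mset (gb B) (mset_set B))"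
  by (simp add: partition_of_alt bsl_mset)



lemma display_partition_of:
  assumes "finite B"
  shows "display (card B) (partition_of B) = B"
proof -
  let ?N = "card B"
  have p: "part (partition_of B) r = gb B (bsl B ! (r - 1))" if "1 \<le> r" "r \<le> ?N" for r
    using filter_part[OF map_gb_sorted[OF assms], of r] that assms by (simp add: partition_of_alt)
  have v: "part (partition_of B) r + (?N - r) = bsl B ! (r - 1)" if "1 \<le> r" "r \<le> ?N" for r
  proof -
    have "card {x\<in>B. x < bsl B ! (r-1)} = ?N - r" using bsl_index[OF assms, of "r-1"] that by simp
    moreover have "card {x\<in>B. x < bsl B ! (r-1)} \<le> bsl B ! (r-1)" by (rule card_below_le)
    ultimately show ?thesis using p[OF that] by (simp add: gb_def)
  qed
  have "display ?N (partition_of B) = {bsl B ! (r - 1) | r. 1 \<le> r \<and> r \<le> ?N}"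
    unfolding display_def using v by (metis (no_types, lifting))
  also have "\<dots> = set (bsl B)"
  proof
    show "{bsl B ! (r - 1) |r. 1 \<le> r \<and> r \<le> ?N} \<subseteq> set (bsl B)"
    proof safe
      fix r assume "1 \<le> r" "r \<le> ?N"
      then show "bsl B ! (r - 1) \<in> set (bsl B)" using assms by (intro nth_mem) simp
    qed
    show "set (bsl B) \<subseteq> {bsl B ! (r - 1) |r. 1 \<le> r \<and> r \<le> ?N}"
    proof
      fix x assume "x \<in> set (bsl B)"
      then obtain i where "i < length (bsl B)" "bsl B ! i = x" by (auto simp: in_set_conv_nth)
      then have "i < ?N" "bsl B ! i = x" using assms by auto
      then show "x \<in> {bsl B ! (r - 1) |r. 1 \<le> r \<and> r \<le> ?N}" by (intro CollectI exI[of _ "Suc i"]) auto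
    qed
  qed
  finally show ?thesis using assms by simp
qed


definition beta :: "nat \<Rightarrow> nat list \<Rightarrow> nat \<Rightarrow> nat" where
  "beta N xs r = part xs r + (N - r)"

lemma display_eq: "display N xs = beta N xs ` {1..N}"
proof
  show "display N xs \<subseteq> beta N xs ` {1..N}" unfolding display_def beta_def by auto
  show "beta N xs ` {1..N} \<subseteq> display N xs"
  proof
    fix x assume "x \<in> beta N xs ` {1..N}"
    then obtain r where "r \<in> {1..N}" "x = beta N xs r" by auto
    then have "x = part xs r + (N - r) \<and> 1 \<le> r \<and> r \<le> N" unfolding beta_def by auto
    then show "x \<in> display N xs" unfolding display_def by blast
  qed
qed

lemma beta_strict:
  assumes "is_partition xs" "1 \<le> r" "r < r'" "r' \<le> N"
  shows "beta N xs r' < beta N xs r"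
  using part_mono[OF assms(1,2), of r'] assms unfolding beta_def by simp

lemma beta_inj: "is_partition xs \<Longrightarrow> inj_on (beta N xs) {1..N}"
  unfolding inj_on_def by (metis atLeastAtMost_iff beta_strict less_irrefl linorder_neqE_nat)

lemma display_card: "is_partition xs \<Longrightarrow> card (display N xs) = N"
proof -
  assume "is_partition xs"
  have "card (beta N xs ` {1..N}) = card {1..N}" by (rule card_image[OF beta_inj[OF \<open>is_partition xs\<close>]])
  then show ?thesis by (simp add: display_eq)
qed

lemma display_finite[simp]: "finite (display N xs)"
  by (simp add: display_eq)

lemma beta_below:
  assumes "is_partition xs" "1 \<le> r" "r \<le> N"
  shows "{x \<in> display N xs. x < beta N xs r} = beta N xs ` {r+1..N}"
proof -
  have "beta N xs r' < beta N xs r \<longleftrightarrow> r < r'" if "1 \<le> r'" "r' \<le> N" for r'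
    using beta_strict[OF assms(1)] assms that by (metis linorder_neqE_nat not_less_iff_gr_or_eq)
  then show ?thesis unfolding display_eq using assms by (auto simp: image_iff)
qed

lemma beta_below_card:
  assumes "is_partition xs" "1 \<le> r" "r \<le> N"
  shows "card {x \<in> display N xs. x < beta N xs r} = N - r"
proof -
  have "inj_on (beta N xs) {r+1..N}" by (rule inj_on_subset[OF beta_inj[OF assms(1)]]) auto
  then have "card (beta N xs ` {r+1..N}) = card {r+1..N}" by (rule card_image)
  then show ?thesis using beta_below[OF assms] by simp
qed

lemma sorted_desc_unique:
  assumes "sorted_wrt (\<ge>) (xs::nat list)" "sorted_wrt (\<ge>) ys" "mset xs = mset ys"
  shows "xs = ys"
proof -
  have "sorted (rev xs)" "sorted (rev ys)" using assms by (simp_all add: sorted_wrt_rev)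
  moreover have "mset (rev xs) = mset (rev ys)" using assms by simp
  ultimately have "rev xs = rev ys" by (metis properties_for_sort)
  then show ?thesis by simp
qed

lemma map_part_upt:
  assumes "length xs \<le> N"
  shows "map (part xs) [1..<N+1] = xs @ replicate (N - length xs) 0"
proof (rule nth_equalityI)
  fix i assume "i < length (map (part xs) [1..<N + 1])"
  then have "i < N" by (simp del: upt_Suc)
  then show "map (part xs) [1..<N + 1] ! i = (xs @ replicate (N - length xs) 0) ! i"
    using assms by (auto simp: nth_append Defs.part_def nth_upt simp del: upt_Suc)
qed (use assms in \<open>simp del: upt_Suc\<close>)

lemma partition_of_display:
  assumes "is_partition xs" "length xs \<le> N"
  shows "partition_of (display N xs) = xs"
proof -
  let ?D = "display N xs"
  have "mset (partition_of ?D) = filter_mset (\<lambda>x. 0 < x) (image_mset (gb ?D) (mset_set ?D))"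
    by (simp add: partition_of_mset)
  also have "image_mset (gb ?D) (mset_set ?D) = image_mset (gb ?D \<circ> beta N xs) (mset_set {1..N})"
  proof -
    have "mset_set ?D = image_mset (beta N xs) (mset_set {1..N})"
      unfolding display_eq by (rule image_mset_mset_set[OF beta_inj[OF assms(1)], symmetric])
    then show ?thesis by (simp add: multiset.map_comp)
  qed
  also have "\<dots> = image_mset (part xs) (mset_set {1..N})"
  proof (rule image_mset_cong)
    fix r assume "r \<in># mset_set {1..N}"
    then have r: "1 \<le> r" "r \<le> N" by auto
    show "(gb ?D \<circ> beta N xs) r = part xs r"
      using beta_below_card[OF assms(1) r] by (simp add: gb_def beta_def)
  qed
  also have "\<dots> = mset (map (part xs) [1..<N+1])"
  proof -
    have "{1..N} = {1..<N+1}" by auto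
    then show ?thesis by (simp del: upt_Suc)
  qed
  finally have "mset (partition_of ?D) = filter_mset (\<lambda>x. 0 < x) (mset (map (part xs) [1..<N+1]))" .
  also have "\<dots> = filter_mset (\<lambda>x. 0 < x) (mset (xs @ replicate (N - length xs) 0))"
    unfolding map_part_upt[OF assms(2)] ..
  also have "\<dots> = mset xs"
  proof -
    have "\<forall>x\<in>set xs. 0 < x" using assms(1) unfolding is_partition_def by (metis gr0I)
    then have "filter (\<lambda>x. 0 < x) xs = xs" by simp
    then show ?thesis by (metis filter_append filter_replicate less_irrefl append_Nil2 replicate_0 mset_filter filter_False replicate_eq_replicate)
  qed
  finally show ?thesis
    using sorted_desc_unique assms(1) partition_of_is_partition[of ?D]
    unfolding is_partition_def by (metis display_finite)
qed


definition rk :: "nat set \<Rightarrow> nat \<Rightarrow> nat" where "rk D x = card {y\<in>D. x \<le> y}"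
definition key :: "nat \<Rightarrow> nat \<Rightarrow> nat set \<Rightarrow> nat \<Rightarrow> nat \<times> nat" where
  "key c e D x = (c * x + e * rk D x, rk D x mod c)"
definition KB :: "nat \<Rightarrow> nat \<Rightarrow> nat set \<Rightarrow> (nat \<times> nat) multiset" where
  "KB c e D = image_mset (key c e D) (mset_set D)"

lemma rk_beta:
  assumes "is_partition xs" "1 \<le> r" "r \<le> N"
  shows "rk (display N xs) (beta N xs r) = r"
proof -
  have "beta N xs r \<le> beta N xs r' \<longleftrightarrow> r' \<le> r" if "1 \<le> r'" "r' \<le> N" for r'
    using beta_strict[OF assms(1)] assms that by (metis le_eq_less_or_eq linorder_not_le)
  then have "{y \<in> display N xs. beta N xs r \<le> y} = beta N xs ` {1..r}"
    unfolding display_eq using assms by (auto simp: image_iff)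
  moreover have "inj_on (beta N xs) {1..r}" by (rule inj_on_subset[OF beta_inj[OF assms(1)]]) (use assms in auto)
  ultimately show ?thesis unfolding rk_def by (simp add: card_image)
qed

lemma KB_display:
  assumes "is_partition xs"
  shows "KB c e (display N xs) = image_mset (\<lambda>r. (c * beta N xs r + e * r, r mod c)) (mset_set {1..N})"
proof -
  have "mset_set (display N xs) = image_mset (beta N xs) (mset_set {1..N})"
    unfolding display_eq by (rule image_mset_mset_set[OF beta_inj[OF assms(1)], symmetric])
  then have "KB c e (display N xs) = image_mset (key c e (display N xs) \<circ> beta N xs) (mset_set {1..N})"
    by (simp add: KB_def multiset.map_comp)
  also have "\<dots> = image_mset (\<lambda>r. (c * beta N xs r + e * r, r mod c)) (mset_set {1..N})"
    by (rule image_mset_cong) (auto simp: key_def rk_beta assms)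
  finally show ?thesis .
qed

lemma ladder_card:
  fixes e c n :: nat and R C' :: int and xs :: "nat list"
  assumes c0: "0 < c" and ce: "c \<le> e" and P: "is_partition xs" and len: "length xs \<le> n"
  defines "y0 \<equiv> \<lambda>x::nat. C' + ((R - int x) div int c) * int (e - c)"
  defines "A \<equiv> {x. 1 \<le> x \<and> x \<le> n \<and> int c dvd (R - int x) \<and> 1 \<le> y0 x}"
  defines "L \<equiv> int c * C' + int (e - c) * R + int c * int n"
  shows "card (nodes xs \<inter> ladder e (e - c) R C') =
         card A - size (filter_mset (\<lambda>(v, \<rho>). int \<rho> = R mod int c \<and> int v < L) (KB c e (display n xs)))"
proof -
  define X where "X = {x. 1 \<le> x \<and> x \<le> n \<and> int c dvd (R - int x) \<and> 1 \<le> y0 x \<and> y0 x \<le> int (part xs x)}"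
  define g where "g = (\<lambda>x::nat. (int x, y0 x))"
  have cb: "int (e - c) - int e = - int c" using ce by simp
  have "nodes xs \<inter> ladder e (e - c) R C' = g ` X"
  proof
    show "nodes xs \<inter> ladder e (e - c) R C' \<subseteq> g ` X"
    proof
      fix p assume "p \<in> nodes xs \<inter> ladder e (e - c) R C'"
      then obtain r j where
          p: "p = (int r, int j)" "1 \<le> r" "r \<le> length xs" "1 \<le> j" "j \<le> part xs r"
          unfolding nodes_def by blast
      from \<open>p \<in> nodes xs \<inter> ladder e (e - c) R C'\<close> obtain k where
          pk: "p = (R + k * (int (e - c) - int e), C' + k * int (e - c))"
          unfolding ladder_def by blast
      then have k: "int r = R + k * (int (e - c) - int e)" "int j = C' + k * int (e - c)" using p(1) by auto
      have rk: "R - int r = k * int c" using k(1) cb by (simp add: algebra_simps)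
      then have dv: "int c dvd (R - int r)" by simp
      have "(R - int r) div int c = k" using rk c0 by simp
      then have "y0 r = int j" using k(2) by (simp add: y0_def)
      then have "r \<in> X" using p dv len unfolding X_def by auto
      then show "p \<in> g ` X" using p \<open>y0 r = int j\<close> unfolding g_def by auto
    qed
  next
    show "g ` X \<subseteq> nodes xs \<inter> ladder e (e - c) R C'"
    proof
      fix p assume "p \<in> g ` X"
      then obtain x where x: "x \<in> X" "p = g x" by auto
      define k where "k = (R - int x) div int c"
      have dv: "int c dvd (R - int x)" using x unfolding X_def by auto
      then have rk: "R - int x = k * int c" unfolding k_def by simp
      have y: "1 \<le> y0 x" "y0 x \<le> int (part xs x)" "1 \<le> x" "x \<le> n" using x unfolding X_def by auto
      have "x \<le> length xs" using y by (auto simp: Defs.part_def split: if_splits)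
      have "p \<in> nodes xs"
        unfolding nodes_def using y \<open>x \<le> length xs\<close> x(2) unfolding g_def
        by (intro CollectI exI[of _ x] exI[of _ "nat (y0 x)"]) auto
      moreover have "p \<in> ladder e (e - c) R C'"
        unfolding ladder_def using x(2) rk cb unfolding g_def y0_def k_def[symmetric]
        by (intro CollectI exI[of _ k]) (auto simp: algebra_simps)
      ultimately show "p \<in> nodes xs \<inter> ladder e (e - c) R C'" by simp
    qed
  qed
  moreover have "inj_on g X" unfolding g_def inj_on_def by auto
  ultimately have c1: "card (nodes xs \<inter> ladder e (e - c) R C') = card X" by (simp add: card_image)
  define Y where "Y = {x. 1 \<le> x \<and> x \<le> n \<and> int c dvd (R - int x) \<and> int (part xs x) < y0 x}"
  have key: "int (part xs x) < y0 x \<longleftrightarrow> int (c * beta n xs x + e * x) < L"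
    if "int c dvd (R - int x)" "x \<le> n" for x
  proof -
    have bi: "int (c * beta n xs x + e * x) = int c * int (part xs x) + int c * int n + int (e - c) * int x"
      unfolding beta_def
      by (simp only: of_nat_add of_nat_mult of_nat_diff[OF that(2)] of_nat_diff[OF ce]) (simp add: algebra_simps)
    have h: "int c * ((R - int x) div int c) = R - int x" using that by simp
    have "int c * y0 x = int c * C' + (int c * ((R - int x) div int c)) * int (e - c)"
      unfolding y0_def by (simp add: algebra_simps)
    then have cy: "int c * y0 x = int c * C' + (R - int x) * int (e - c)" unfolding h .
    have "int (part xs x) < y0 x \<longleftrightarrow> int c * int (part xs x) < int c * y0 x" using c0 by simp
    also have "int c * int (part xs x) < int c * y0 x \<longleftrightarrow> int (c * beta n xs x + e * x) < L"
      unfolding cy L_def bi by (simp add: algebra_simps)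
    finally show ?thesis .
  qed
  have YA: "Y \<subseteq> A" unfolding Y_def A_def by auto
  have XA: "X = A - Y" unfolding X_def A_def Y_def by auto
  have finA: "finite A" unfolding A_def by (rule finite_subset[of _ "{..n}"]) auto
  have c2: "card X = card A - card Y" using XA YA finA by (simp add: card_Diff_subset finite_subset)
  have "size (filter_mset (\<lambda>(v, \<rho>). int \<rho> = R mod int c \<and> int v < L) (KB c e (display n xs)))
        = card {r\<in>{1..n}. int (r mod c) = R mod int c \<and> int (c * beta n xs r + e * r) < L}"
    unfolding KB_display[OF P] filter_mset_image_mset by simp
  also have "{r\<in>{1..n}. int (r mod c) = R mod int c \<and> int (c * beta n xs r + e * r) < L} = Y"
  proof -
    have "int (r mod c) = R mod int c \<longleftrightarrow> int c dvd (R - int r)" for r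
      by (metis mod_eq_dvd_iff of_nat_mod)
    then show ?thesis unfolding Y_def using key by auto
  qed
  finally show ?thesis using c1 c2 by simp
qed

lemma ladder_from_KB:
  assumes "0 < c" "c \<le> e" "is_partition xs" "length xs \<le> n" "is_partition ys" "length ys \<le> n"
    and "KB c e (display n xs) = KB c e (display n ys)"
  shows "ladder_equiv e (e - c) xs ys"
  unfolding ladder_equiv_def
  using ladder_card[OF assms(1,2,3,4)] ladder_card[OF assms(1,2,5,6)] assms(7) by simp


definition rot :: "(nat \<Rightarrow> bool) \<Rightarrow> nat \<Rightarrow> nat \<Rightarrow> nat \<Rightarrow> nat set \<Rightarrow> nat set" where
  "rot Q e a b D = {x. (x < a \<and> x \<in> D) \<or> (a \<le> x \<and> x + e \<le> b \<and> x + e \<in> D) \<or>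
                       (b < x + e \<and> x \<le> b \<and> Q x) \<or> (b < x \<and> x \<in> D)}"

lemma card_split:
  assumes "finite D" "l \<le> m"
  shows "card {y\<in>D. l \<le> y} = card {y\<in>D. l \<le> y \<and> y < m} + card {y\<in>D. m \<le> (y::nat)}"
proof -
  have "{y\<in>D. l \<le> y} = {y\<in>D. l \<le> y \<and> y < m} \<union> {y\<in>D. m \<le> y}" using assms by auto
  moreover have "{y\<in>D. l \<le> y \<and> y < m} \<inter> {y\<in>D. m \<le> y} = {}" by auto
  ultimately show ?thesis using assms by (simp add: card_Un_disjoint)
qed

lemma win_card:
  assumes "\<And>x. Q (x + e) = Q x"
  shows "card {x. y \<le> x \<and> x < y + e \<and> Q x} = cnt Q e"
  using cnt_interval[of y "y+e" Q] cnt_periodic[of Q e y, OF assms] by simp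

lemma card_shift:
  "card {x. l \<le> x \<and> x + e \<le> b \<and> x + e \<in> D} = card {y\<in>D. l + e \<le> y \<and> y \<le> (b::nat)}"
proof -
  have "{y\<in>D. l + e \<le> y \<and> y \<le> b} = (\<lambda>x. x + e) ` {x. l \<le> x \<and> x + e \<le> b \<and> x + e \<in> D}"
  proof
    show "{y \<in> D. l + e \<le> y \<and> y \<le> b} \<subseteq> (\<lambda>x. x + e) ` {x. l \<le> x \<and> x + e \<le> b \<and> x + e \<in> D}"
    proof
      fix y assume "y \<in> {y \<in> D. l + e \<le> y \<and> y \<le> b}"
      then show "y \<in> (\<lambda>x. x + e) ` {x. l \<le> x \<and> x + e \<le> b \<and> x + e \<in> D}"
        by (intro image_eqI[of _ _ "y - e"]) auto
    qed
  qed auto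
  moreover have "inj_on (\<lambda>x. x + e) A" for A by (simp add: inj_on_def)
  ultimately show ?thesis by (simp add: card_image)
qed


lemma window_step:
  assumes per: "\<And>x. Q (x + e) = Q x" and g: "g y = g (y + e)" and e0: "0 < e"
  shows "image_mset g (mset_set {x. y \<le> x \<and> x < y + e \<and> Q x}) =
         image_mset g (mset_set {x. Suc y \<le> x \<and> x < Suc y + e \<and> Q x})"
proof -
  have False: "e \<noteq> 0" using e0 by simp
  define M where "M = {x. Suc y \<le> x \<and> x < y + e \<and> Q x}"
  have fM: "finite M" unfolding M_def by (rule finite_subset[of _ "{..<y+e}"]) auto
  show ?thesis
  proof (cases "Q y")
    case True
    then have "{x. y \<le> x \<and> x < y + e \<and> Q x} = insert y M" unfolding M_def using False by auto
    moreover have "{x. Suc y \<le> x \<and> x < Suc y + e \<and> Q x} = insert (y + e) M"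
      unfolding M_def using True per[of y] False by (auto simp: less_Suc_eq)
    moreover have "y \<notin> M" "y + e \<notin> M" unfolding M_def by auto
    ultimately show ?thesis using fM g by simp
  next
    case False
    then have "{x. y \<le> x \<and> x < y + e \<and> Q x} = M" unfolding M_def by (auto simp: le_eq_less_or_eq)
    moreover have "{x. Suc y \<le> x \<and> x < Suc y + e \<and> Q x} = M"
      unfolding M_def using False per[of y] by (auto simp: less_Suc_eq)
    ultimately show ?thesis by simp
  qed
qed

lemma window_shift:
  fixes d :: nat
  assumes per: "\<And>x. Q (x + e) = Q x" and g: "\<And>y. y + e < B \<Longrightarrow> g y = g (y + e)" and e0: "0 < e"
  shows "y + d + e \<le> B \<Longrightarrow> image_mset g (mset_set {x. y \<le> x \<and> x < y + e \<and> Q x}) =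
         image_mset g (mset_set {x. y + d \<le> x \<and> x < y + d + e \<and> Q x})"
proof (induction d)
  case 0 then show ?case by simp
next
  case (Suc d)
  then have "image_mset g (mset_set {x. y \<le> x \<and> x < y + e \<and> Q x}) =
         image_mset g (mset_set {x. y + d \<le> x \<and> x < y + d + e \<and> Q x})" by simp
  also have "\<dots> = image_mset g (mset_set {x. Suc (y + d) \<le> x \<and> x < Suc (y + d) + e \<and> Q x})"
    by (rule window_step[where Q=Q and e=e and g=g and y="y+d"]) (use per g Suc.prems e0 in auto)
  finally show ?case by simp
qed


lemma mset_set_Un4:
  assumes "finite A" "finite B" "finite C" "finite E"
    "A \<inter> B = {}" "A \<inter> C = {}" "A \<inter> E = {}" "B \<inter> C = {}" "B \<inter> E = {}" "C \<inter> E = {}"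
  shows "mset_set (A \<union> B \<union> C \<union> E) = mset_set A + mset_set B + mset_set C + mset_set E"
proof -
  have "mset_set (A \<union> B) = mset_set A + mset_set B" using assms by (simp add: mset_set_Union)
  moreover have "mset_set (A \<union> B \<union> C) = mset_set (A \<union> B) + mset_set C" using assms by (intro mset_set_Union) auto
  moreover have "mset_set (A \<union> B \<union> C \<union> E) = mset_set (A \<union> B \<union> C) + mset_set E" using assms by (intro mset_set_Union) auto
  ultimately show ?thesis by simp
qed

lemma rot_KB:
  fixes Q :: "nat \<Rightarrow> bool" and D :: "nat set"
  assumes per: "\<And>x. Q (x + e) = Q x" and e0: "0 < e" and cdef: "c = cnt Q e"
    and fin: "finite D" and ab: "a + e \<le> b + 1"
    and H1: "\<And>x. a \<le> x \<Longrightarrow> x < a + e \<Longrightarrow> (x \<in> D \<longleftrightarrow> Q x)"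
    and H2: "card {x\<in>D. a + e \<le> x \<and> x \<le> b} = card {x. a + e \<le> x \<and> x \<le> b \<and> Q x}"
  shows "KB c e (rot Q e a b D) = KB c e D"
proof -
  define D' where "D' = rot Q e a b D"
  have bb0: "b + 1 - e + e = b + 1" using ab by simp
  have finD': "finite D'"
  proof -
    have "D' \<subseteq> D \<union> {..b} \<union> (\<lambda>y. y - e) ` D" unfolding D'_def rot_def by force
    then show ?thesis using fin by (meson finite_Un finite_atMost finite_imageI finite_subset)
  qed
  have mem: "x \<in> D' \<longleftrightarrow> (x < a \<and> x \<in> D) \<or> (a \<le> x \<and> x + e \<le> b \<and> x + e \<in> D) \<or>
                       (b < x + e \<and> x \<le> b \<and> Q x) \<or> (b < x \<and> x \<in> D)" for x
    unfolding D'_def rot_def by simp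
  have qint: "card {y. l \<le> y \<and> y < m \<and> Q y} = cnt Q m - cnt Q l" if "l \<le> m" for l m
    using cnt_interval[OF that] by simp
  have cper: "cnt Q (x + e) = cnt Q x + c" for x using cnt_periodic[of Q e x, OF per] cdef by simp
  define R4 where "R4 = card {y\<in>D. b + 1 \<le> y}"
  have R4': "card {y\<in>D'. b + 1 \<le> y} = R4"
  proof -
    have "y \<in> D' \<longleftrightarrow> y \<in> D" if "b + 1 \<le> y" for y
    proof -
      have "\<not> y < a" "\<not> y + e \<le> b" "\<not> y \<le> b" "b < y" using that ab by linarith+
      then show ?thesis unfolding mem by simp
    qed
    then have "{y\<in>D'. b + 1 \<le> y} = {y\<in>D. b + 1 \<le> y}" by auto
    then show ?thesis unfolding R4_def by simp
  qed
  have reg1: "y \<in> D' \<longleftrightarrow> y \<in> D" if "y < a" for y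
  proof -
    have "\<not> a \<le> y" "\<not> b < y + e" "\<not> b < y" using that ab by linarith+
    then show ?thesis unfolding mem using that by simp
  qed
  have reg3: "y \<in> D' \<longleftrightarrow> y + e \<in> D" if "a \<le> y" "y + e \<le> b" for y
  proof -
    have "\<not> y < a" "\<not> b < y + e" "\<not> b < y" using that ab by linarith+
    then show ?thesis unfolding mem using that by simp
  qed
  have reg4: "y \<in> D' \<longleftrightarrow> y \<in> D" if "b < y" for y
  proof -
    have "\<not> y < a" "\<not> y + e \<le> b" "\<not> y \<le> b" using that ab by linarith+
    then show ?thesis unfolding mem using that by simp
  qed
  have inwin: "y \<in> D' \<longleftrightarrow> Q y" if "b + 1 - e \<le> y" "y < b + 1" for y
  proof -
    have "a \<le> y" "\<not> y < a" "\<not> y + e \<le> b" "b < y + e" "y \<le> b" "\<not> b < y" using that ab by linarith+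
    then show ?thesis unfolding mem by simp
  qed
  have E2: "{y\<in>D'. b + 1 - e \<le> y \<and> y < b + 1} = {y. b + 1 - e \<le> y \<and> y < b + 1 - e + e \<and> Q y}"
  proof -
    have "b + 1 - e + e = b + 1" using ab by simp
    then show ?thesis using inwin by auto
  qed
  have E2card: "card {y. z \<le> y \<and> y < b + 1 \<and> Q y} = card {y\<in>D'. z \<le> y \<and> y < b + 1}" if "b + 1 - e \<le> z" for z
  proof -
    have "{y\<in>D'. z \<le> y \<and> y < b + 1} = {y. z \<le> y \<and> y < b + 1 \<and> Q y}" using that inwin by auto
    then show ?thesis by simp
  qed
  define h where "h x = cnt Q (b + 1) - cnt Q x + R4" for x
  define gk where "gk x = (c * x + e * h x, h x mod c)" for x
  have rk2: "rk D x = h x" if "a \<le> x" "x < a + e" for x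
  proof -
    have "rk D x = card {y\<in>D. x \<le> y \<and> y < a + e} + card {y\<in>D. a + e \<le> y}"
      unfolding rk_def using card_split[OF fin, of x "a+e"] that by simp
    also have "card {y\<in>D. a + e \<le> y} = card {y\<in>D. a + e \<le> y \<and> y < b + 1} + R4"
      unfolding R4_def using card_split[OF fin, of "a+e" "b+1"] ab by simp
    also have "{y\<in>D. x \<le> y \<and> y < a + e} = {y. x \<le> y \<and> y < a + e \<and> Q y}" using H1 that by auto
    also have "card {y\<in>D. a + e \<le> y \<and> y < b + 1} = card {y. a + e \<le> y \<and> y < b + 1 \<and> Q y}"
    proof -
      have "{y\<in>D. a + e \<le> y \<and> y < b + 1} = {x\<in>D. a + e \<le> x \<and> x \<le> b}"
           "{y. a + e \<le> y \<and> y < b + 1 \<and> Q y} = {x. a + e \<le> x \<and> x \<le> b \<and> Q x}" by auto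
      then show ?thesis using H2 by simp
    qed
    finally show ?thesis unfolding h_def using qint that ab cnt_mono[of x "a+e" Q] cnt_mono[of "a+e" "b+1" Q]
      by simp
  qed
  have rkE2: "rk D' z = h z" if "b + 1 - e \<le> z" "z < b + 1" for z
  proof -
    have "rk D' z = card {y\<in>D'. z \<le> y \<and> y < b + 1} + card {y\<in>D'. b + 1 \<le> y}"
      unfolding rk_def using card_split[OF finD', of z "b+1"] that by simp
    then show ?thesis unfolding h_def R4' using E2card[OF that(1)] qint[of z "b+1"] that by simp
  qed
  have gk_per: "gk y = gk (y + e)" if "y + e < b + 1" for y
  proof -
    have "cnt Q (y + e) \<le> cnt Q (b + 1)" using that by (intro cnt_mono) simp
    then have "h y = h (y + e) + c" unfolding h_def using cper[of y] by simp
    then show ?thesis unfolding gk_def by (simp add: algebra_simps)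
  qed
  define D1 where "D1 = {x\<in>D. x < a}"
  define D2 where "D2 = {x\<in>D. a \<le> x \<and> x < a + e}"
  define D3 where "D3 = {x\<in>D. a + e \<le> x \<and> x \<le> b}"
  define D4 where "D4 = {x\<in>D. b < x}"
  define E2 where "E2 = {y. b + 1 - e \<le> y \<and> y < b + 1 - e + e \<and> Q y}"
  define E3 where "E3 = {x. a \<le> x \<and> x + e \<le> b \<and> x + e \<in> D}"
  have Dsplit: "D = D1 \<union> D2 \<union> D3 \<union> D4" unfolding D1_def D2_def D3_def D4_def by auto
  have D'split: "D' = D1 \<union> E3 \<union> E2 \<union> D4"
  proof (rule set_eqI)
    fix y
    have bb: "b + 1 - e + e = b + 1" using ab by simp
    consider "y < a" | "a \<le> y" "y + e \<le> b" | "b + 1 - e \<le> y" "y < b + 1" | "b < y" using ab by linarith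
    then show "y \<in> D' \<longleftrightarrow> y \<in> D1 \<union> E3 \<union> E2 \<union> D4"
    proof cases
      case 1
      then have "\<not> b + 1 - e \<le> y" "\<not> y + e \<le> b \<or> \<not> a \<le> y" "\<not> b < y" using ab by linarith+
      then show ?thesis using reg1[OF 1] unfolding D1_def E3_def E2_def D4_def by auto
    next
      case 2
      then have "\<not> b + 1 - e \<le> y" "\<not> y < a" "\<not> b < y" using ab by linarith+
      then show ?thesis using reg3[OF 2] unfolding D1_def E3_def E2_def D4_def by auto
    next
      case 3
      then have "\<not> y + e \<le> b" "\<not> y < a" "\<not> b < y" using ab by linarith+
      then show ?thesis using inwin[OF 3] bb unfolding D1_def E3_def E2_def D4_def by auto
    next
      case 4
      then have "\<not> y + e \<le> b" "\<not> y < a" "\<not> y < b + 1" using ab by linarith+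
      then show ?thesis using reg4[OF 4] bb unfolding D1_def E3_def E2_def D4_def by auto
    qed
  qed
  have fins: "finite D1" "finite D2" "finite D3" "finite D4" "finite E2" "finite E3"
    using fin finD' Dsplit D'split by auto
  have msD: "mset_set D = mset_set D1 + mset_set D2 + mset_set D3 + mset_set D4"
    unfolding Dsplit by (rule mset_set_Un4) (use fins ab in \<open>auto simp: D1_def D2_def D3_def D4_def\<close>)
  have msD': "mset_set D' = mset_set D1 + mset_set E3 + mset_set E2 + mset_set D4"
    unfolding D'split by (rule mset_set_Un4) (use fins ab in \<open>auto simp: D1_def E3_def E2_def D4_def\<close>)
  have b4: "image_mset (key c e D') (mset_set D4) = image_mset (key c e D) (mset_set D4)"
  proof (rule image_mset_cong)
    fix x assume "x \<in># mset_set D4"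
    then have "b < x" using fins unfolding D4_def by simp
    then have "{y\<in>D'. x \<le> y} = {y\<in>D. x \<le> y}" using reg4 by auto
    then show "key c e D' x = key c e D x" unfolding key_def rk_def by simp
  qed
  have cntD'a: "card {y\<in>D'. a \<le> y} = card {y\<in>D. a \<le> y}"
  proof -
    have "card {y\<in>D. a \<le> y} = card {y\<in>D. a \<le> y \<and> y < a + e} + card {y\<in>D. a + e \<le> y}"
      using card_split[OF fin, of a "a+e"] by simp
    also have "card {y\<in>D. a + e \<le> y} = card {y\<in>D. a + e \<le> y \<and> y < b + 1} + R4"
      unfolding R4_def using card_split[OF fin, of "a+e" "b+1"] ab by simp
    also have "{y\<in>D. a \<le> y \<and> y < a + e} = {y. a \<le> y \<and> y < a + e \<and> Q y}" using H1 by auto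
    also have "card {y. a \<le> y \<and> y < a + e \<and> Q y} = c" using win_card[where Q=Q and e=e, OF per] cdef by simp
    finally have l: "card {y\<in>D. a \<le> y} = c + card {y\<in>D. a + e \<le> y \<and> y < b + 1} + R4" by simp
    have "card {y\<in>D'. a \<le> y} = card {y\<in>D'. a \<le> y \<and> y < b + 1 - e} + card {y\<in>D'. b + 1 - e \<le> y}"
      using card_split[OF finD', of a "b+1-e"] ab by simp
    also have "card {y\<in>D'. b + 1 - e \<le> y} = card {y\<in>D'. b + 1 - e \<le> y \<and> y < b + 1} + R4"
      using card_split[OF finD', of "b+1-e" "b+1"] R4' by simp
    also have "card {y\<in>D'. b + 1 - e \<le> y \<and> y < b + 1} = c"
      unfolding E2 using win_card[where Q=Q and e=e, OF per] cdef by simp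
    also have "{y\<in>D'. a \<le> y \<and> y < b + 1 - e} = {x. a \<le> x \<and> x + e \<le> b \<and> x + e \<in> D}"
      using ab reg3 by auto
    also have "card \<dots> = card {y\<in>D. a + e \<le> y \<and> y \<le> b}" by (rule card_shift)
    also have "{y\<in>D. a + e \<le> y \<and> y \<le> b} = {y\<in>D. a + e \<le> y \<and> y < b + 1}" by auto
    finally show ?thesis using l by simp
  qed
  have b1: "image_mset (key c e D') (mset_set D1) = image_mset (key c e D) (mset_set D1)"
  proof (rule image_mset_cong)
    fix x assume "x \<in># mset_set D1"
    then have xa: "x < a" using fins unfolding D1_def by simp
    have "rk D' x = card {y\<in>D'. x \<le> y \<and> y < a} + card {y\<in>D'. a \<le> y}"
      unfolding rk_def using card_split[OF finD', of x a] xa by simp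
    also have "{y\<in>D'. x \<le> y \<and> y < a} = {y\<in>D. x \<le> y \<and> y < a}" using reg1 by auto
    also have "card {y\<in>D. x \<le> y \<and> y < a} + card {y\<in>D'. a \<le> y} = rk D x"
      unfolding rk_def cntD'a using card_split[OF fin, of x a] xa by simp
    finally show "key c e D' x = key c e D x" unfolding key_def by simp
  qed
  have E3img: "E3 = (\<lambda>x. x - e) ` D3"
  proof
    show "E3 \<subseteq> (\<lambda>x. x - e) ` D3"
    proof
      fix x assume "x \<in> E3"
      then show "x \<in> (\<lambda>x. x - e) ` D3" unfolding E3_def D3_def by (intro image_eqI[of _ _ "x + e"]) auto
    qed
    show "(\<lambda>x. x - e) ` D3 \<subseteq> E3" unfolding E3_def D3_def by auto
  qed
  have injD3: "inj_on (\<lambda>x. x - e) D3" unfolding inj_on_def D3_def by auto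
  have b3: "image_mset (key c e D') (mset_set E3) = image_mset (key c e D) (mset_set D3)"
  proof -
    have "mset_set E3 = image_mset (\<lambda>x. x - e) (mset_set D3)"
      unfolding E3img by (rule image_mset_mset_set[OF injD3, symmetric])
    then have "image_mset (key c e D') (mset_set E3) = image_mset (key c e D' \<circ> (\<lambda>x. x - e)) (mset_set D3)"
      by (simp add: multiset.map_comp)
    also have "\<dots> = image_mset (key c e D) (mset_set D3)"
    proof (rule image_mset_cong)
      fix x assume "x \<in># mset_set D3"
      then have x: "x \<in> D" "a + e \<le> x" "x \<le> b" using fins unfolding D3_def by auto
      have "rk D x = card {y\<in>D. x \<le> y \<and> y < b + 1} + R4"
        unfolding rk_def R4_def using card_split[OF fin, of x "b+1"] x by simp
      have "rk D' (x - e) = card {y\<in>D'. x - e \<le> y \<and> y < b + 1 - e} + card {y\<in>D'. b + 1 - e \<le> y}"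
        unfolding rk_def using card_split[OF finD', of "x - e" "b+1-e"] x by simp
      also have "card {y\<in>D'. b + 1 - e \<le> y} = card {y\<in>D'. b + 1 - e \<le> y \<and> y < b + 1} + R4"
        using card_split[OF finD', of "b+1-e" "b+1"] R4' by simp
      also have "card {y\<in>D'. b + 1 - e \<le> y \<and> y < b + 1} = c"
        unfolding E2 using win_card[where Q=Q and e=e, OF per] cdef by simp
      also have "{y\<in>D'. x - e \<le> y \<and> y < b + 1 - e} = {y. x - e \<le> y \<and> y + e \<le> b \<and> y + e \<in> D}"
        using x ab reg3 by auto
      also have "card \<dots> = card {y\<in>D. x - e + e \<le> y \<and> y \<le> b}" by (rule card_shift)
      also have "{y\<in>D. x - e + e \<le> y \<and> y \<le> b} = {y\<in>D. x \<le> y \<and> y < b + 1}" using x by auto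
      finally have "rk D' (x - e) = rk D x + c" using \<open>rk D x = _\<close> by simp
      moreover have "c * (x - e) + e * (rk D x + c) = c * x + e * rk D x"
      proof -
        obtain x' where "x = x' + e" using x by (metis add.commute le_add2 le_iff_add add_leD2)
        then show ?thesis by (simp add: algebra_simps)
      qed
      ultimately show "(key c e D' \<circ> (\<lambda>x. x - e)) x = key c e D x" unfolding key_def by simp
    qed
    finally show ?thesis .
  qed
  have b2: "image_mset (key c e D') (mset_set E2) = image_mset (key c e D) (mset_set D2)"
  proof -
    have ad: "a + (b + 1 - e - a) + e \<le> b + 1" using ab by linarith
    have "image_mset (key c e D') (mset_set E2) = image_mset gk (mset_set E2)"
      by (rule image_mset_cong) (use fins bb0 in \<open>auto simp: E2_def gk_def key_def rkE2\<close>)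
    moreover have "image_mset (key c e D) (mset_set D2) = image_mset gk (mset_set D2)"
      by (rule image_mset_cong) (use fins in \<open>auto simp: D2_def gk_def key_def rk2\<close>)
    moreover have "D2 = {x. a \<le> x \<and> x < a + e \<and> Q x}" unfolding D2_def using H1 by auto
    moreover have "image_mset gk (mset_set {x. a \<le> x \<and> x < a + e \<and> Q x}) =
                   image_mset gk (mset_set {x. a + (b + 1 - e - a) \<le> x \<and> x < a + (b + 1 - e - a) + e \<and> Q x})"
      by (rule window_shift[where Q=Q and e=e and g=gk and B="b+1", OF per gk_per e0 ad])
    moreover have "a + (b + 1 - e - a) = b + 1 - e" using ab by simp
    ultimately show ?thesis unfolding E2_def by simp
  qed
  have "KB c e D' = KB c e D"
    unfolding KB_def msD msD' using b1 b2 b3 b4 by simp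
  then show ?thesis unfolding D'_def .
qed


lemma rot_reg1: "a + e \<le> b + 1 \<Longrightarrow> y < a \<Longrightarrow> y \<in> rot Q e a b D \<longleftrightarrow> y \<in> D"
  unfolding rot_def by auto
lemma rot_reg3: "a \<le> y \<Longrightarrow> y + e \<le> b \<Longrightarrow> y \<in> rot Q e a b D \<longleftrightarrow> y + e \<in> D"
  unfolding rot_def by auto
lemma rot_reg2: "a + e \<le> b + 1 \<Longrightarrow> b + 1 - e \<le> y \<Longrightarrow> y \<le> b \<Longrightarrow> y \<in> rot Q e a b D \<longleftrightarrow> Q y"
  unfolding rot_def by auto
lemma rot_reg4: "b < y \<Longrightarrow> y \<in> rot Q e a b D \<longleftrightarrow> y \<in> D"
  unfolding rot_def by auto

lemma rot_finite: assumes "finite D" shows "finite (rot Q e a b D)"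
proof -
  have "rot Q e a b D \<subseteq> D \<union> {..b} \<union> (\<lambda>y. y - e) ` D"
  proof
    fix x assume "x \<in> rot Q e a b D"
    then show "x \<in> D \<union> {..b} \<union> (\<lambda>y. y - e) ` D" unfolding rot_def by (auto intro: image_eqI[of _ _ "x + e"])
  qed
  then show ?thesis using assms by (meson finite_Un finite_atMost finite_imageI finite_subset)
qed

lemma rot_gaps:
  fixes Q :: "nat \<Rightarrow> bool"
  assumes per: "\<And>x. Q (x + e) = Q x" and ab: "a + e \<le> b + 1"
    and low: "\<And>y. y < a + e \<Longrightarrow> Q y \<Longrightarrow> y \<in> D"
  defines "P \<equiv> \<lambda>y. Q y \<and> y \<notin> D"
  defines "P' \<equiv> \<lambda>y. Q y \<and> y \<notin> rot Q e a b D"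
  shows "x \<le> a \<Longrightarrow> cnt P' x = 0"
    and "a \<le> x \<Longrightarrow> x + e \<le> b + 1 \<Longrightarrow> cnt P' x = cnt P (x + e)"
    and "b + 1 - e \<le> x \<Longrightarrow> x \<le> b + 1 \<Longrightarrow> cnt P' x = cnt P (b + 1)"
    and "b + 1 \<le> x \<Longrightarrow> cnt P' x = cnt P x"
proof -
  have i: "cnt P' x = 0" if "x \<le> a" for x
    using that
  proof (induction x)
    case (Suc x)
    then have "\<not> P' x" unfolding P'_def using rot_reg1[OF ab, of x Q D] low[of x] by auto
    then show ?case using Suc by (simp add: cnt_Suc)
  qed simp
  then show "x \<le> a \<Longrightarrow> cnt P' x = 0" .
  have P0: "cnt P (a + e) = 0"
  proof -
    have "{y. y < a + e \<and> P y} = {}" unfolding P_def using low by auto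
    then show ?thesis unfolding cnt_def by simp
  qed
  have ii: "cnt P' x = cnt P (x + e)" if "a \<le> x" "x + e \<le> b + 1" for x
    using that
  proof (induction x rule: dec_induct)
    case base then show ?case using i[of a] P0 by simp
  next
    case (step x)
    then have "P' x \<longleftrightarrow> P (x + e)" unfolding P'_def P_def using rot_reg3[of a x e b Q D] per[of x] by auto
    then show ?case using step by (simp add: cnt_Suc)
  qed
  then show "a \<le> x \<Longrightarrow> x + e \<le> b + 1 \<Longrightarrow> cnt P' x = cnt P (x + e)" .
  have iii: "cnt P' x = cnt P (b + 1)" if "b + 1 - e \<le> x" "x \<le> b + 1" for x
    using that
  proof (induction x rule: dec_induct)
    case base then show ?case using ii[of "b + 1 - e"] ab by simp
  next
    case (step x)
    then have "\<not> P' x" unfolding P'_def using rot_reg2[OF ab, of x Q D] by auto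
    then show ?case using step by (simp add: cnt_Suc)
  qed
  then show "b + 1 - e \<le> x \<Longrightarrow> x \<le> b + 1 \<Longrightarrow> cnt P' x = cnt P (b + 1)" .
  have "cnt P' x = cnt P x" if "b + 1 \<le> x" for x
    using that
  proof (induction x rule: dec_induct)
    case base then show ?case using iii[of "b + 1"] ab by simp
  next
    case (step x)
    then have "P' x \<longleftrightarrow> P x" unfolding P'_def P_def using rot_reg4[of b x Q e a D] by auto
    then show ?case using step by (simp add: cnt_Suc)
  qed
  then show "b + 1 \<le> x \<Longrightarrow> cnt P' x = cnt P x" .
qed

lemma partition_of_relabel_mset:
  assumes "finite E" "\<And>x. x \<in> E \<Longrightarrow> P x"
  shows "mset (partition_of (cnt P ` E)) =
         filter_mset (\<lambda>x. 0 < x) (image_mset (cnt (\<lambda>y. P y \<and> y \<notin> E)) (mset_set E))"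
proof -
  have inj: "inj_on (cnt P) E" unfolding inj_on_def using assms(2) cnt_inj by blast
  have "mset (partition_of (cnt P ` E)) = filter_mset (\<lambda>x. 0 < x) (image_mset (gb (cnt P ` E)) (mset_set (cnt P ` E)))"
    using assms by (simp add: partition_of_mset)
  also have "mset_set (cnt P ` E) = image_mset (cnt P) (mset_set E)"
    by (rule image_mset_mset_set[OF inj, symmetric])
  also have "image_mset (gb (cnt P ` E)) (image_mset (cnt P) (mset_set E)) =
             image_mset (cnt (\<lambda>y. P y \<and> y \<notin> E)) (mset_set E)"
    unfolding multiset.map_comp
  proof (rule image_mset_cong)
    fix x assume "x \<in># mset_set E"
    then have x: "x \<in> E" using assms by simp
    have "{l \<in> cnt P ` E. l < cnt P x} = cnt P ` {y\<in>E. y < x}"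
    proof
      show "{l \<in> cnt P ` E. l < cnt P x} \<subseteq> cnt P ` {y \<in> E. y < x}"
      proof
        fix l assume "l \<in> {l \<in> cnt P ` E. l < cnt P x}"
        then obtain y where y: "y \<in> E" "l = cnt P y" "cnt P y < cnt P x" by auto
        then have "y < x" using cnt_mono[of x y P] by (metis not_le)
        then show "l \<in> cnt P ` {y \<in> E. y < x}" using y by auto
      qed
      show "cnt P ` {y \<in> E. y < x} \<subseteq> {l \<in> cnt P ` E. l < cnt P x}"
        using assms(2) cnt_strict by auto
    qed
    then have "card {l \<in> cnt P ` E. l < cnt P x} = card {y\<in>E. y < x}"
      using inj by (simp add: card_image inj_on_subset)
    moreover have "cnt P x = card {y\<in>E. y < x} + cnt (\<lambda>y. P y \<and> y \<notin> E) x"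
    proof -
      have "{y. y < x \<and> P y} = {y\<in>E. y < x} \<union> {y. y < x \<and> (P y \<and> y \<notin> E)}" using assms(2) by auto
      moreover have "card ({y\<in>E. y < x} \<union> {y. y < x \<and> (P y \<and> y \<notin> E)}) =
                     card {y\<in>E. y < x} + card {y. y < x \<and> (P y \<and> y \<notin> E)}"
        by (rule card_Un_disjoint) (use assms in auto)
      ultimately show ?thesis unfolding cnt_def by simp
    qed
    ultimately show "(gb (cnt P ` E) \<circ> cnt P) x = cnt (\<lambda>y. P y \<and> y \<notin> E) x"
      unfolding gb_def by simp
  qed
  finally show ?thesis .
qed


lemma rot_Ipart:
  fixes Q :: "nat \<Rightarrow> bool"
  assumes per: "\<And>x. Q (x + e) = Q x" and ab: "a + e \<le> b + 1" and e0: "0 < e"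
    and low: "\<And>y. y < a + e \<Longrightarrow> Q y \<Longrightarrow> y \<in> D" and fin: "finite D"
    and cQ: "c = cnt Q e" and Pb: "cnt (\<lambda>y. Q y \<and> y \<notin> D) (b + 1) = s" and s0: "0 < s"
  shows "mset (partition_of (cnt Q ` {x \<in> rot Q e a b D. Q x})) =
         replicate_mset c s + mset (partition_of (cnt Q ` {x \<in> D. Q x}))"
proof -
  define D' where "D' = rot Q e a b D"
  define P where "P = (\<lambda>y. Q y \<and> y \<notin> D)"
  define P' where "P' = (\<lambda>y. Q y \<and> y \<notin> D')"
  note G = rot_gaps[where Q=Q and e=e and a=a and b=b and D=D, OF per ab low, folded P_def D'_def, folded P'_def]
  have finD': "finite D'" unfolding D'_def by (rule rot_finite[OF fin])
  have eqP': "(\<lambda>y. Q y \<and> y \<notin> {x \<in> D'. Q x}) = P'" unfolding P'_def by auto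
  have eqP: "(\<lambda>y. Q y \<and> y \<notin> {x \<in> D. Q x}) = P" unfolding P_def by auto
  have L: "mset (partition_of (cnt Q ` {x \<in> D'. Q x})) =
           filter_mset (\<lambda>x. 0 < x) (image_mset (cnt P') (mset_set {x \<in> D'. Q x}))"
  proof -
    have "mset (partition_of (cnt Q ` {x \<in> D'. Q x})) =
           filter_mset (\<lambda>x. 0 < x) (image_mset (cnt (\<lambda>y. Q y \<and> y \<notin> {x \<in> D'. Q x})) (mset_set {x \<in> D'. Q x}))"
      by (rule partition_of_relabel_mset) (use finD' in auto)
    then show ?thesis by (simp only: eqP')
  qed
  have R: "mset (partition_of (cnt Q ` {x \<in> D. Q x})) =
           filter_mset (\<lambda>x. 0 < x) (image_mset (cnt P) (mset_set {x \<in> D. Q x}))"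
  proof -
    have "mset (partition_of (cnt Q ` {x \<in> D. Q x})) =
           filter_mset (\<lambda>x. 0 < x) (image_mset (cnt (\<lambda>y. Q y \<and> y \<notin> {x \<in> D. Q x})) (mset_set {x \<in> D. Q x}))"
      by (rule partition_of_relabel_mset) (use fin in auto)
    then show ?thesis by (simp only: eqP)
  qed
  define A1 where "A1 = {x\<in>D'. Q x \<and> x < a}"
  define A3 where "A3 = {x\<in>D'. Q x \<and> a \<le> x \<and> x + e \<le> b}"
  define A2 where "A2 = {x. b + 1 - e \<le> x \<and> x < b + 1 - e + e \<and> Q x}"
  define A4 where "A4 = {x\<in>D'. Q x \<and> b < x}"
  define B1 where "B1 = {x\<in>D. Q x \<and> x < a + e}"
  define B3 where "B3 = {x\<in>D. Q x \<and> a + e \<le> x \<and> x \<le> b}"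
  define B4 where "B4 = {x\<in>D. Q x \<and> b < x}"
  have bb: "b + 1 - e + e = b + 1" using ab by simp
  have A2sub: "A2 = {x\<in>D'. Q x \<and> b + 1 - e \<le> x \<and> x \<le> b}"
    unfolding A2_def D'_def using rot_reg2[OF ab] bb by auto
  have splitA: "{x\<in>D'. Q x} = A1 \<union> A3 \<union> A2 \<union> A4"
    unfolding A1_def A3_def A2sub A4_def using ab by auto
  have splitB: "{x\<in>D. Q x} = B1 \<union> B3 \<union> B4" unfolding B1_def B3_def B4_def by auto
  have finA: "finite A1" "finite A2" "finite A3" "finite A4" using finD' unfolding A1_def A2sub A3_def A4_def by auto
  have finB: "finite B1" "finite B3" "finite B4" using fin unfolding B1_def B3_def B4_def by auto
  have msA: "mset_set {x\<in>D'. Q x} = mset_set A1 + mset_set A3 + mset_set A2 + mset_set A4"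
    unfolding splitA by (rule mset_set_Un4) (use finA ab in \<open>auto simp: A1_def A3_def A2sub A4_def\<close>)
  have msB: "mset_set {x\<in>D. Q x} = mset_set B1 + mset_set B3 + mset_set B4"
  proof -
    have "mset_set (B1 \<union> B3) = mset_set B1 + mset_set B3" using finB by (intro mset_set_Union) (auto simp: B1_def B3_def)
    moreover have "mset_set (B1 \<union> B3 \<union> B4) = mset_set (B1 \<union> B3) + mset_set B4"
      using finB ab by (intro mset_set_Union) (auto simp: B1_def B3_def B4_def)
    ultimately show ?thesis unfolding splitB by simp
  qed
  have fA1: "filter_mset (\<lambda>x. 0 < x) (image_mset (cnt P') (mset_set A1)) = {#}"
  proof -
    have "\<forall>x\<in>A1. cnt P' x = 0" using G(1) unfolding A1_def by auto
    then have z: "{x\<in>A1. 0 < cnt P' x} = {}" by auto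
    have "filter_mset (\<lambda>x. 0 < x) (image_mset (cnt P') (mset_set A1)) = image_mset (cnt P') (mset_set {x\<in>A1. 0 < cnt P' x})"
      using finA by (simp add: filter_mset_image_mset)
    then show ?thesis unfolding z by simp
  qed
  have fB1: "filter_mset (\<lambda>x. 0 < x) (image_mset (cnt P) (mset_set B1)) = {#}"
  proof -
    have "cnt P (a + e) = 0" using G(2)[of a] G(1)[of a] ab by simp
    then have "\<forall>x\<in>B1. cnt P x = 0" unfolding B1_def using cnt_mono[of _ "a+e" P] by fastforce
    then have z: "{x\<in>B1. 0 < cnt P x} = {}" by auto
    have "filter_mset (\<lambda>x. 0 < x) (image_mset (cnt P) (mset_set B1)) = image_mset (cnt P) (mset_set {x\<in>B1. 0 < cnt P x})"
      using finB by (simp add: filter_mset_image_mset)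
    then show ?thesis unfolding z by simp
  qed
  have A4B4: "A4 = B4" unfolding A4_def B4_def D'_def using rot_reg4 by auto
  have fA4: "image_mset (cnt P') (mset_set A4) = image_mset (cnt P) (mset_set B4)"
    unfolding A4B4 by (rule image_mset_cong) (use G(4) finB in \<open>auto simp: B4_def\<close>)
  have A3img: "A3 = (\<lambda>y. y - e) ` B3"
  proof
    show "A3 \<subseteq> (\<lambda>y. y - e) ` B3"
    proof
      fix x assume "x \<in> A3"
      then have "x + e \<in> B3" unfolding A3_def B3_def D'_def using rot_reg3[of a x e b Q D] per[of x] by auto
      then show "x \<in> (\<lambda>y. y - e) ` B3" by (intro image_eqI[of _ _ "x + e"]) auto
    qed
    show "(\<lambda>y. y - e) ` B3 \<subseteq> A3"
    proof
      fix x assume "x \<in> (\<lambda>y. y - e) ` B3"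
      then obtain y where y: "y \<in> B3" "x = y - e" by auto
      then have "y - e + e = y" "a \<le> y - e" unfolding B3_def by auto
      then show "x \<in> A3" using y per[of "y - e"] rot_reg3[of a "y - e" e b Q D] unfolding A3_def B3_def D'_def by auto
    qed
  qed
  have fA3: "image_mset (cnt P') (mset_set A3) = image_mset (cnt P) (mset_set B3)"
  proof -
    have inj: "inj_on (\<lambda>y. y - e) B3" unfolding inj_on_def B3_def using ab by auto
    have "mset_set A3 = image_mset (\<lambda>y. y - e) (mset_set B3)"
      unfolding A3img by (rule image_mset_mset_set[OF inj, symmetric])
    then have "image_mset (cnt P') (mset_set A3) = image_mset (cnt P' \<circ> (\<lambda>y. y - e)) (mset_set B3)"
      by (simp add: multiset.map_comp)
    also have "\<dots> = image_mset (cnt P) (mset_set B3)"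
    proof (rule image_mset_cong)
      fix y assume "y \<in># mset_set B3"
      then have y: "a + e \<le> y" "y \<le> b" using finB unfolding B3_def by auto
      then show "(cnt P' \<circ> (\<lambda>y. y - e)) y = cnt P y" using G(2)[of "y - e"] by simp
    qed
    finally show ?thesis .
  qed
  have fA2: "image_mset (cnt P') (mset_set A2) = replicate_mset c s"
  proof -
    have "image_mset (cnt P') (mset_set A2) = image_mset (\<lambda>_. s) (mset_set A2)"
      by (rule image_mset_cong) (use G(3) Pb finA bb in \<open>auto simp: A2_def P_def\<close>)
    moreover have "card A2 = c" unfolding A2_def cQ by (rule win_card[where Q=Q and e=e, OF per])
    ultimately show ?thesis by (simp add: image_mset_const_eq)
  qed
  have rep: "filter_mset (\<lambda>x. 0 < x) (replicate_mset c s) = replicate_mset c s" using s0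
    by (induction c) auto
  have e1: "filter_mset (\<lambda>x. 0 < x) (image_mset (cnt P') (mset_set {x\<in>D'. Q x})) =
    filter_mset (\<lambda>x. 0 < x) (image_mset (cnt P') (mset_set A1)) + filter_mset (\<lambda>x. 0 < x) (image_mset (cnt P') (mset_set A3))
    + filter_mset (\<lambda>x. 0 < x) (image_mset (cnt P') (mset_set A2)) + filter_mset (\<lambda>x. 0 < x) (image_mset (cnt P') (mset_set A4))"
    unfolding msA by (simp only: image_mset_union filter_union_mset)
  also have "\<dots> = {#} + filter_mset (\<lambda>x. 0 < x) (image_mset (cnt P) (mset_set B3)) + replicate_mset c s
     + filter_mset (\<lambda>x. 0 < x) (image_mset (cnt P) (mset_set B4))"
    by (simp only: fA1 fA3 fA2 fA4 rep)
  finally have e1': "filter_mset (\<lambda>x. 0 < x) (image_mset (cnt P') (mset_set {x\<in>D'. Q x})) =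
    {#} + filter_mset (\<lambda>x. 0 < x) (image_mset (cnt P) (mset_set B3)) + replicate_mset c s
     + filter_mset (\<lambda>x. 0 < x) (image_mset (cnt P) (mset_set B4))" .
  have e2: "filter_mset (\<lambda>x. 0 < x) (image_mset (cnt P) (mset_set {x\<in>D. Q x})) =
    filter_mset (\<lambda>x. 0 < x) (image_mset (cnt P) (mset_set B1)) + filter_mset (\<lambda>x. 0 < x) (image_mset (cnt P) (mset_set B3))
    + filter_mset (\<lambda>x. 0 < x) (image_mset (cnt P) (mset_set B4))"
    unfolding msB by (simp only: image_mset_union filter_union_mset)
  show ?thesis
    unfolding D'_def[symmetric] L R e1' e2 fB1 by (simp add: ac_simps)
qed


lemma gap_facts:
  fixes lam :: "nat list"
  assumes P: "is_partition lam" and len: "length lam \<le> N" and s1: "1 \<le> s"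
    and gap: "cb \<le> part lam s - part lam (Suc s)" and cb0: "0 < cb"
  shows "s \<le> length lam" "cb \<le> part lam s" "cb \<le> beta N lam s"
    "beta N lam s \<in> display N lam"
    "\<And>r. 1 \<le> r \<Longrightarrow> r \<le> N \<Longrightarrow> beta N lam s \<le> beta N lam r \<longleftrightarrow> r \<le> s"
    "\<And>x. x \<in> display N lam \<Longrightarrow> x < beta N lam s \<Longrightarrow> x + cb < beta N lam s"
    "card {x \<in> display N lam. beta N lam s \<le> x} = s"
proof -
  show ps: "cb \<le> part lam s" using gap by simp
  then show sl: "s \<le> length lam" using cb0 by (auto simp: Defs.part_def split: if_splits)
  then have sN: "s \<le> N" using len by simp
  show "cb \<le> beta N lam s" using ps unfolding beta_def by simp
  show "beta N lam s \<in> display N lam" unfolding display_eq using s1 sN by auto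
  show top: "beta N lam s \<le> beta N lam r \<longleftrightarrow> r \<le> s" if "1 \<le> r" "r \<le> N" for r
    using beta_strict[OF P, of s r N] beta_strict[OF P, of r s N] that s1 sN
    by (metis le_less linorder_not_le)
  show "x + cb < beta N lam s" if xd: "x \<in> display N lam" "x < beta N lam s" for x
  proof -
    obtain r where r: "1 \<le> r" "r \<le> N" "x = beta N lam r" using xd(1) unfolding display_eq by auto
    then have "s < r" using top[OF r(1,2)] xd(2) by simp
    then have "part lam r \<le> part lam (Suc s)" using part_mono[OF P, of "Suc s" r] by simp
    moreover have "part lam (Suc s) + cb \<le> part lam s" using gap ps cb0 by linarith
    ultimately show ?thesis using r \<open>s < r\<close> unfolding beta_def by linarith
  qed
  have "{x \<in> display N lam. beta N lam s \<le> x} = beta N lam ` {1..s}"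
    unfolding display_eq using top sN by (auto simp: image_iff)
  moreover have "inj_on (beta N lam) {1..s}" by (rule inj_on_subset[OF beta_inj[OF P]]) (use sN in auto)
  ultimately show "card {x \<in> display N lam. beta N lam s \<le> x} = s" by (simp add: card_image)
qed

lemma tau_facts:
  fixes lam :: "nat list"
  assumes P: "is_partition lam" and len: "length lam \<le> N" and s1: "1 \<le> s"
    and gap: "cb \<le> part lam s - part lam (Suc s)" and cb0: "0 < cb"
  shows "is_partition (tau_of cb s lam)" "length (tau_of cb s lam) \<le> N"
    "display N (tau_of cb s lam) = (\<lambda>x. if beta N lam s \<le> x then x - cb else x) ` display N lam"
proof -
  note gf = gap_facts[OF assms]
  define M where "M = map (\<lambda>r. if r \<le> s then part lam r - cb else part lam r) [1..<length lam + 1]"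
  have tau: "tau_of cb s lam = filter (\<lambda>x. 0 < x) M" unfolding tau_of_def M_def ..
  have lenM: "length M = length lam" unfolding M_def by (simp del: upt_Suc)
  have Mnth: "M ! i = (if i + 1 \<le> s then part lam (i+1) - cb else part lam (i+1))" if "i < length lam" for i
    unfolding M_def using that by (simp add: nth_upt del: upt_Suc)
  have sorted: "sorted_wrt (\<ge>) M"
  proof (rule sorted_wrt_iff_nth_less[THEN iffD2], intro allI impI)
    fix i j assume ij: "i < j" "j < length M"
    have pm: "part lam (j+1) \<le> part lam (i+1)" using part_mono[OF P, of "i+1" "j+1"] ij by simp
    have "part lam (Suc s) \<le> part lam s - cb" using gap cb0 by linarith
    moreover have "j + 1 > s \<Longrightarrow> part lam (j+1) \<le> part lam (Suc s)" using part_mono[OF P, of "Suc s" "j+1"] by simp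
    moreover have "i + 1 \<le> s \<Longrightarrow> part lam s \<le> part lam (i+1)" using part_mono[OF P, of "i+1" s] by simp
    ultimately show "M ! j \<le> M ! i" using Mnth ij lenM pm by auto
  qed
  show "is_partition (tau_of cb s lam)" unfolding is_partition_def tau
    using sorted by (auto intro: sorted_wrt_filter)
  show "length (tau_of cb s lam) \<le> N" unfolding tau using len lenM by (metis length_filter_le order_trans)
  have pt: "part (tau_of cb s lam) r = (if r \<le> s then part lam r - cb else part lam r)" if "1 \<le> r" for r
  proof -
    have "part (tau_of cb s lam) r = (if 1 \<le> r \<and> r \<le> length M then M!(r-1) else 0)"
      unfolding tau by (rule filter_part[OF sorted])
    then show ?thesis using Mnth[of "r-1"] lenM that gf(1) by (auto simp: Defs.part_def)
  qed
  have "beta N (tau_of cb s lam) r = (\<lambda>x. if beta N lam s \<le> x then x - cb else x) (beta N lam r)"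
    if "1 \<le> r" "r \<le> N" for r
  proof -
    have "r \<le> s \<Longrightarrow> cb \<le> part lam r" using part_mono[OF P, of r s] that gf(2) by simp
    then show ?thesis using pt[OF that(1)] gf(5)[OF that] unfolding beta_def by auto
  qed
  then show "display N (tau_of cb s lam) = (\<lambda>x. if beta N lam s \<le> x then x - cb else x) ` display N lam"
    unfolding display_eq image_image by (intro image_cong) auto
qed


lemma cnt_compl: "cnt (\<lambda>y. \<not> P y) x + cnt P x = x"
  by (induction x) (auto simp: cnt_Suc)

lemma cnt_inj_on: "inj_on (cnt P) {x. P x}"
  unfolding inj_on_def using cnt_inj by blast

theorem mainTheorem17:
  fixes e c n u s :: nat and I :: "int set" and \<nu> :: "nat list"
  assumes "4 \<le> e" and "2 \<le> c" and "c \<le> e - 2"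
    and "union_of_classes e c I"
    and "e dvd n" and "u \<le> n"
    and "uI_partition n I u \<nu>"
    and "I_separated n I \<nu>"
    and "\<not> restricted (e - c) (comp_part n I \<nu>)"
    and "s = (LEAST s. 1 \<le> s \<and>
               e - c \<le> part (comp_part n I \<nu>) s - part (comp_part n I \<nu>) (Suc s))"
  shows "(\<exists>\<xi>. uI_partition n I u \<xi> \<and>
             I_part n I \<xi> = copies_join c [s] (I_part n I \<nu>) \<and>
             comp_part n I \<xi> = tau_of (e - c) s (comp_part n I \<nu>)) \<and>
         (\<forall>\<xi>. uI_partition n I u \<xi> \<and>
             I_part n I \<xi> = copies_join c [s] (I_part n I \<nu>) \<and>
             comp_part n I \<xi> = tau_of (e - c) s (comp_part n I \<nu>)
           \<longrightarrow> ladder_equiv e (e - c) \<nu> \<xi>)"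
proof -
  define cb where "cb = e - c"
  have e0: "0 < e" and cb0: "0 < cb" and c0: "0 < c" and ce: "c \<le> e" using assms(1-3) unfolding cb_def by auto
  from assms(4) obtain C where C: "C \<subseteq> {0..<int e}" "card C = c" "I = {x. x mod int e \<in> C}"
    unfolding union_of_classes_def by blast
  define Q where "Q = (\<lambda>x::nat. int x \<in> I)"
  define NQ where "NQ = (\<lambda>x::nat. \<not> Q x)"
  have per: "Q (x + e) = Q x" for x unfolding Q_def C(3) by simp
  have perN: "NQ (x + e) = NQ x" for x unfolding NQ_def using per by simp
  have cQ: "cnt Q e = c"
  proof -
    have "{y. y < e \<and> Q y} = nat ` C"
    proof
      show "{y. y < e \<and> Q y} \<subseteq> nat ` C"
      proof
        fix y assume "y \<in> {y. y < e \<and> Q y}"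
        then have "int y \<in> C" "y < e" unfolding Q_def C(3) by auto
        then show "y \<in> nat ` C" by (intro image_eqI[of _ _ "int y"]) auto
      qed
      show "nat ` C \<subseteq> {y. y < e \<and> Q y}"
      proof
        fix y assume "y \<in> nat ` C"
        then obtain z where z: "z \<in> C" "y = nat z" by auto
        then have "0 \<le> z" "z < int e" using C(1) by auto
        then show "y \<in> {y. y < e \<and> Q y}" using z unfolding Q_def C(3) by auto
      qed
    qed
    moreover have "inj_on nat C"
    proof (rule inj_onI)
      fix x y assume "x \<in> C" "y \<in> C" "nat x = nat y"
      moreover have "0 \<le> x" "0 \<le> y" using C(1) \<open>x \<in> C\<close> \<open>y \<in> C\<close> by auto
      ultimately show "x = y" by simp
    qed
    ultimately show ?thesis unfolding cnt_def using C(2) by (simp add: card_image)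
  qed
  have cNQ: "cnt NQ e = cb" using cnt_compl[of Q e] cQ unfolding NQ_def cb_def by simp
  have relI: "relabel I = cnt Q" unfolding relabel_def cnt_def Q_def by (rule ext) (simp add: conj_commute)
  have relNI: "relabel (- I) = cnt NQ" unfolding relabel_def cnt_def NQ_def Q_def by (rule ext) (simp add: conj_commute)
  have Ipart: "I_part n I xs = partition_of (cnt Q ` {p \<in> display n xs. Q p})" for xs
    unfolding I_part_def sub_part_def relI Q_def ..
  have Cpart: "comp_part n I xs = partition_of (cnt NQ ` {p \<in> display n xs. NQ p})" for xs
    unfolding comp_part_def sub_part_def relNI NQ_def Q_def by simp
  have uIfacts: "finite (display n xs) \<and> card (display n xs) = n \<and> card {p\<in>display n xs. Q p} = u \<and>
                  card {p\<in>display n xs. NQ p} = n - u"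
    if "uI_partition n I u xs" for xs
  proof -
    have P: "is_partition xs" "card {p \<in> display n xs. Q p} = u"
      using that unfolding uI_partition_def Q_def by auto
    have cd: "card (display n xs) = n" using display_card[OF P(1)] .
    have "display n xs = {p\<in>display n xs. Q p} \<union> {p\<in>display n xs. NQ p}" unfolding NQ_def by auto
    then have "card (display n xs) = card {p\<in>display n xs. Q p} + card {p\<in>display n xs. NQ p}"
      by (metis (no_types, lifting) NQ_def card_Un_disjoint disjoint_iff display_finite finite_Un mem_Collect_eq)
    then show ?thesis using cd P by simp
  qed
  define D where "D = display n \<nu>"
  have nuP: "is_partition \<nu>" "length \<nu> \<le> n" using assms(7) unfolding uI_partition_def by auto
  have finD: "finite D" and cardD: "card D = n" and cardDI: "card {p\<in>D. Q p} = u"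
    and cardDB: "card {p\<in>D. NQ p} = n - u" using uIfacts[OF assms(7)] unfolding D_def by auto
  define SB where "SB = cnt NQ ` {p\<in>D. NQ p}"
  define lam where "lam = comp_part n I \<nu>"
  have lamSB: "lam = partition_of SB" unfolding lam_def SB_def Cpart D_def ..
  have finSB: "finite SB" unfolding SB_def using finD by simp
  have cardSB: "card SB = n - u" unfolding SB_def using cardDB
    by (metis (mono_tags, lifting) card_image cnt_inj_on inj_on_subset mem_Collect_eq subsetI)
  have lamP: "is_partition lam" "length lam \<le> n - u" "display (n - u) lam = SB"
    using partition_of_is_partition[OF finSB] partition_of_length[OF finSB] display_partition_of[OF finSB]
      cardSB lamSB by auto
  obtain r0 where r0: "1 \<le> r0" "cb \<le> part lam r0 - part lam (Suc r0)"
    using assms(9) unfolding restricted_def lam_def[symmetric] cb_def[symmetric] by (auto simp: not_less)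
  have sdef: "1 \<le> s \<and> cb \<le> part lam s - part lam (Suc s)"
    unfolding assms(10) lam_def[symmetric] cb_def[symmetric] by (rule LeastI[of _ r0]) (use r0 in auto)
  then have s1: "1 \<le> s" and sgap: "cb \<le> part lam s - part lam (Suc s)" by auto
  note gf = gap_facts[OF lamP(1,2) s1 sgap cb0]
  note tf = tau_facts[OF lamP(1,2) s1 sgap cb0]
  define bs where "bs = beta (n - u) lam s"
  have bsSB: "bs \<in> SB" using gf(4) lamP(3) unfolding bs_def by simp
  obtain p where p: "p \<in> D" "NQ p" "cnt NQ p = bs" using bsSB unfolding SB_def by auto
  have bscb: "cb \<le> bs" using gf(3) unfolding bs_def .
  have SBgap: "x \<in> SB \<Longrightarrow> x < bs \<Longrightarrow> x + cb < bs" for x using gf(6) lamP(3) unfolding bs_def by simp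
  have perk: "Q (y + e * k) = Q y" for y k
  proof (induction k)
    case (Suc k)
    have "y + e * Suc k = (y + e * k) + e" by simp
    then show ?case using per[of "y + e * k"] Suc by (simp only:)
  qed simp
  have "{y. y < e \<and> Q y} \<noteq> {}"
  proof
    assume "{y. y < e \<and> Q y} = {}"
    then have "cnt Q e = 0" unfolding cnt_def by simp
    with cQ c0 show False by simp
  qed
  then obtain y0 where y0: "Q y0" by auto
  obtain m where m: "\<forall>x\<in>D. x < m" using finD finite_nat_set_iff_bounded by blast
  have unbP: "\<exists>x\<ge>k. Q x \<and> x \<notin> D" for k
  proof -
    have "1 * (m + k) \<le> e * (m + k)" using e0 by (intro mult_le_mono1) simp
    then have "y0 + e * (m + k) \<ge> m + k" by (simp only: mult_1)
    then show ?thesis using perk[of y0 "m + k"] y0 m by (intro exI[of _ "y0 + e * (m + k)"]) auto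
  qed
  define q where "q = (LEAST x. Q x \<and> x \<notin> D)"
  have qQ': "Q q \<and> q \<notin> D" unfolding q_def by (rule LeastI_ex) (use unbP[of 0] in blast)
  then have qQ: "Q q" "q \<notin> D" by auto
  have belowq: "y < q \<Longrightarrow> Q y \<Longrightarrow> y \<in> D" for y unfolding q_def using not_less_Least by blast
  have sep: "x \<in> D \<Longrightarrow> NQ x \<Longrightarrow> x < q" for x
    using assms(8) qQ unfolding I_separated_def D_def[symmetric] NQ_def Q_def by blast
  have pq: "p < q" using sep p by simp
  have pe: "e \<le> p"
  proof (rule ccontr)
    assume "\<not> e \<le> p"
    then have "cnt NQ p < cnt NQ e" using cnt_strict p(2) by simp
    then show False using p(3) cNQ bscb by simp
  qed
  define a where "a = p - e"
  have ap: "a + e = p" unfolding a_def using pe by simp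
  define P where "P = (\<lambda>y. Q y \<and> y \<notin> D)"
  obtain b where b: "P b" "cnt P b = s - 1" using cnt_surj[of P "s - 1"] unbP unfolding P_def by blast
  have qb: "q \<le> b" using b(1) belowq unfolding P_def by (meson not_le)
  have ab: "a + e \<le> b + 1" using ap pq qb by simp
  have Pb: "cnt P (b + 1) = s" using b s1 by (simp add: cnt_Suc)
  have low: "y < a + e \<Longrightarrow> Q y \<Longrightarrow> y \<in> D" for y using belowq ap pq by simp
  have cntNQa: "cnt NQ a + cb = bs" using cnt_periodic[of NQ e a, OF perN] cNQ ap p(3) by simp
  have H1: "x \<in> D \<longleftrightarrow> Q x" if "a \<le> x" "x < a + e" for x
  proof (cases "Q x")
    case True then show ?thesis using low that by simp
  next
    case False
    have "x \<notin> D"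
    proof
      assume xD: "x \<in> D"
      have "NQ x" using False unfolding NQ_def .
      then have "cnt NQ x \<in> SB" using xD unfolding SB_def by auto
      moreover have "cnt NQ x < bs" using cnt_strict[of x p NQ] that ap \<open>NQ x\<close> p(3) by simp
      moreover have "cnt NQ a \<le> cnt NQ x" using cnt_mono that by simp
      ultimately show False using SBgap cntNQa by fastforce
    qed
    then show ?thesis using False by simp
  qed
  have NQb: "x < b" if "x \<in> D" "NQ x" for x
  proof -
    have "x < q" using sep that by blast
    then show ?thesis using qb by simp
  qed
  have H2: "card {x\<in>D. a + e \<le> x \<and> x \<le> b} = card {x. a + e \<le> x \<and> x \<le> b \<and> Q x}"
  proof -
    have top: "card {x\<in>D. NQ x \<and> p \<le> x} = s"
    proof -
      have "cnt NQ ` {x\<in>D. NQ x \<and> p \<le> x} = {y \<in> SB. bs \<le> y}"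
      proof
        show "cnt NQ ` {x\<in>D. NQ x \<and> p \<le> x} \<subseteq> {y \<in> SB. bs \<le> y}"
          unfolding SB_def using cnt_mono p(3) by fastforce
        show "{y \<in> SB. bs \<le> y} \<subseteq> cnt NQ ` {x\<in>D. NQ x \<and> p \<le> x}"
        proof
          fix y assume "y \<in> {y \<in> SB. bs \<le> y}"
          then obtain x where x: "x \<in> D" "NQ x" "y = cnt NQ x" "bs \<le> y" unfolding SB_def by auto
          have "p \<le> x"
          proof (rule ccontr)
            assume "\<not> p \<le> x"
            then have "cnt NQ x < cnt NQ p" using cnt_strict x(2) by simp
            then show False using x p(3) by simp
          qed
          then show "y \<in> cnt NQ ` {x\<in>D. NQ x \<and> p \<le> x}" using x by auto
        qed
      qed
      moreover have "inj_on (cnt NQ) {x\<in>D. NQ x \<and> p \<le> x}"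
        by (rule inj_on_subset[OF cnt_inj_on]) auto
      moreover have "card {y \<in> SB. bs \<le> y} = s" using gf(7) lamP(3) unfolding bs_def by simp
      ultimately show ?thesis by (metis card_image)
    qed
    have gaps: "card {x. x \<le> b \<and> Q x \<and> x \<notin> D} = s"
    proof -
      have "{x. x \<le> b \<and> Q x \<and> x \<notin> D} = {x. x < b + 1 \<and> P x}" unfolding P_def by (auto simp: less_Suc_eq_le)
      then show ?thesis using Pb unfolding cnt_def by simp
    qed
    have l: "{x\<in>D. a + e \<le> x \<and> x \<le> b} = {x\<in>D. NQ x \<and> p \<le> x} \<union> {x\<in>D. Q x \<and> p \<le> x \<and> x \<le> b}"
    proof (rule set_eqI)
      fix x
      show "x \<in> {x\<in>D. a + e \<le> x \<and> x \<le> b} \<longleftrightarrow> x \<in> {x\<in>D. NQ x \<and> p \<le> x} \<union> {x\<in>D. Q x \<and> p \<le> x \<and> x \<le> b}"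
      proof (cases "Q x")
        case True then show ?thesis using ap unfolding NQ_def by auto
      next
        case False
        then have "x \<in> D \<Longrightarrow> x < b" using NQb unfolding NQ_def by blast
        then show ?thesis using ap False unfolding NQ_def by auto
      qed
    qed
    have r: "{x. a + e \<le> x \<and> x \<le> b \<and> Q x} = {x\<in>D. Q x \<and> p \<le> x \<and> x \<le> b} \<union> {x. x \<le> b \<and> Q x \<and> x \<notin> D}"
    proof (rule set_eqI)
      fix x
      have "p \<le> x" if "Q x" "x \<notin> D"
      proof (rule ccontr)
        assume "\<not> p \<le> x"
        then have "x < q" using pq by simp
        then show False using belowq that by blast
      qed
      then show "x \<in> {x. a + e \<le> x \<and> x \<le> b \<and> Q x} \<longleftrightarrow>
        x \<in> {x\<in>D. Q x \<and> p \<le> x \<and> x \<le> b} \<union> {x. x \<le> b \<and> Q x \<and> x \<notin> D}"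
        using ap by auto
    qed
    have fin1: "finite {x\<in>D. Q x \<and> p \<le> x \<and> x \<le> b}" using finD by simp
    have "card {x\<in>D. a + e \<le> x \<and> x \<le> b} = s + card {x\<in>D. Q x \<and> p \<le> x \<and> x \<le> b}"
      unfolding l top[symmetric] by (rule card_Un_disjoint) (use finD in \<open>auto simp: NQ_def\<close>)
    moreover have "card {x. a + e \<le> x \<and> x \<le> b \<and> Q x} = card {x\<in>D. Q x \<and> p \<le> x \<and> x \<le> b} + s"
      unfolding r gaps[symmetric] by (rule card_Un_disjoint) (use fin1 in auto)
    ultimately show ?thesis by simp
  qed
  define D' where "D' = rot Q e a b D"
  have KBeq: "KB c e D' = KB c e D"
    unfolding D'_def by (rule rot_KB[OF per e0 cQ[symmetric] finD ab H1 H2])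
  have finD': "finite D'" unfolding D'_def by (rule rot_finite[OF finD])
  have cardD': "card D' = n"
  proof -
    have "size (KB c e D') = size (KB c e D)" using KBeq by simp
    then show ?thesis unfolding KB_def using cardD by simp
  qed
  have regs: "x < a \<Longrightarrow> (x \<in> D' \<longleftrightarrow> x \<in> D)"
    "a \<le> x \<Longrightarrow> x + e \<le> b \<Longrightarrow> (x \<in> D' \<longleftrightarrow> x + e \<in> D)"
    "b + 1 - e \<le> x \<Longrightarrow> x \<le> b \<Longrightarrow> (x \<in> D' \<longleftrightarrow> Q x)"
    "b < x \<Longrightarrow> (x \<in> D' \<longleftrightarrow> x \<in> D)" for x
    unfolding D'_def using rot_reg1[OF ab] rot_reg3 rot_reg2[OF ab] rot_reg4 by auto
  have DBsplit: "{x\<in>D'. NQ x} = {x\<in>D. NQ x \<and> x < a} \<union> (\<lambda>y. y - e) ` {y\<in>D. NQ y \<and> p \<le> y}"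
  proof
    show "{x\<in>D'. NQ x} \<subseteq> {x\<in>D. NQ x \<and> x < a} \<union> (\<lambda>y. y - e) ` {y\<in>D. NQ y \<and> p \<le> y}"
    proof
      fix x assume x: "x \<in> {x\<in>D'. NQ x}"
      consider "x < a" | "a \<le> x" "x + e \<le> b" | "b + 1 - e \<le> x" "x \<le> b" | "b < x" using ab by linarith
      then show "x \<in> {x\<in>D. NQ x \<and> x < a} \<union> (\<lambda>y. y - e) ` {y\<in>D. NQ y \<and> p \<le> y}"
      proof cases
        case 1 then show ?thesis using x regs(1) by auto
      next
        case 2
        then have "x + e \<in> D" "NQ (x + e)" "p \<le> x + e" using x regs(2) perN[of x] ap by auto
        then have "x + e \<in> {y\<in>D. NQ y \<and> p \<le> y}" by simp
        then show ?thesis by (intro UnI2 image_eqI[of _ _ "x + e"]) auto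
      next
        case 3 then show ?thesis using x regs(3) unfolding NQ_def by auto
      next
        case 4 then show ?thesis using x regs(4) NQb by fastforce
      qed
    qed
    show "{x\<in>D. NQ x \<and> x < a} \<union> (\<lambda>y. y - e) ` {y\<in>D. NQ y \<and> p \<le> y} \<subseteq> {x\<in>D'. NQ x}"
    proof
      fix x assume "x \<in> {x\<in>D. NQ x \<and> x < a} \<union> (\<lambda>y. y - e) ` {y\<in>D. NQ y \<and> p \<le> y}"
      then consider "x \<in> D" "NQ x" "x < a" | y where "y \<in> D" "NQ y" "p \<le> y" "x = y - e" by auto
      then show "x \<in> {x\<in>D'. NQ x}"
      proof cases
        case 1 then show ?thesis using regs(1) by auto
      next
        case 2
        then have "y < b" using NQb by simp
        then have "a \<le> x" "x + e \<le> b" "x + e = y" using 2 ap by auto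
        then show ?thesis using regs(2) 2 perN[of x] by auto
      qed
    qed
  qed
  define f where "f = (\<lambda>x. if bs \<le> x then x - cb else x)"
  have cntNQe: "cnt NQ (y - e) = cnt NQ y - cb" if "e \<le> y" for y
    using cnt_periodic[of NQ e "y - e", OF perN] cNQ that by simp
  have DBfull: "{x\<in>D. NQ x} = {x\<in>D. NQ x \<and> x < a} \<union> {y\<in>D. NQ y \<and> p \<le> y}"
  proof (rule set_eqI)
    fix x
    have "x < a" if "x \<in> D" "\<not> Q x" "x < p"
    proof (rule ccontr)
      assume "\<not> x < a"
      then have "x \<in> D \<longleftrightarrow> Q x" using H1[of x] that(3) ap by simp
      then show False using that by simp
    qed
    then show "x \<in> {x\<in>D. NQ x} \<longleftrightarrow> x \<in> {x\<in>D. NQ x \<and> x < a} \<union> {y\<in>D. NQ y \<and> p \<le> y}"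
      using ap unfolding NQ_def by auto
  qed
  have XB: "cnt NQ ` {x\<in>D'. NQ x} = f ` SB"
  proof -
    have "f ` SB = (f \<circ> cnt NQ) ` {x\<in>D. NQ x \<and> x < a} \<union> (f \<circ> cnt NQ) ` {y\<in>D. NQ y \<and> p \<le> y}"
      unfolding SB_def DBfull image_Un image_comp ..
    also have "(f \<circ> cnt NQ) ` {x\<in>D. NQ x \<and> x < a} = cnt NQ ` {x\<in>D. NQ x \<and> x < a}"
    proof (rule image_cong[OF refl])
      fix x assume "x \<in> {x\<in>D. NQ x \<and> x < a}"
      then have "cnt NQ x \<le> cnt NQ a" using cnt_mono by simp
      then have "\<not> bs \<le> cnt NQ x" using cntNQa cb0 by simp
      then show "(f \<circ> cnt NQ) x = cnt NQ x" unfolding f_def by simp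
    qed
    also have "(f \<circ> cnt NQ) ` {y\<in>D. NQ y \<and> p \<le> y} = cnt NQ ` (\<lambda>y. y - e) ` {y\<in>D. NQ y \<and> p \<le> y}"
      unfolding image_comp
    proof (rule image_cong[OF refl])
      fix y assume "y \<in> {y\<in>D. NQ y \<and> p \<le> y}"
      then have "bs \<le> cnt NQ y" "e \<le> y" using cnt_mono p(3) pe by auto
      then show "(f \<circ> cnt NQ) y = (cnt NQ \<circ> (\<lambda>y. y - e)) y" unfolding f_def using cntNQe by simp
    qed
    finally show ?thesis unfolding DBsplit image_Un by simp
  qed
  define tau where "tau = tau_of cb s lam"
  have tauP: "is_partition tau" "length tau \<le> n - u" "display (n - u) tau = f ` SB"
    using tf lamP(3) unfolding tau_def f_def bs_def by auto
  have compD': "partition_of (cnt NQ ` {x\<in>D'. NQ x}) = tau"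
    unfolding XB tauP(3)[symmetric] by (rule partition_of_display[OF tauP(1,2)])
  have cardDB': "card {x\<in>D'. NQ x} = n - u"
  proof -
    have "card (cnt NQ ` {x\<in>D'. NQ x}) = n - u" unfolding XB tauP(3)[symmetric] by (rule display_card[OF tauP(1)])
    moreover have "inj_on (cnt NQ) {x\<in>D'. NQ x}" by (rule inj_on_subset[OF cnt_inj_on]) auto
    ultimately show ?thesis by (simp add: card_image)
  qed
  have cardDI': "card {x\<in>D'. Q x} = u"
  proof -
    have "D' = {x\<in>D'. Q x} \<union> {x\<in>D'. NQ x}" unfolding NQ_def by auto
    then have "card D' = card {x\<in>D'. Q x} + card {x\<in>D'. NQ x}"
      using finD' by (metis (no_types, lifting) NQ_def card_Un_disjoint disjoint_iff finite_Un mem_Collect_eq)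
    then show ?thesis using cardD' cardDB' assms(6) by simp
  qed
  define alpha where "alpha = I_part n I \<nu>"
  have alphaD: "alpha = partition_of (cnt Q ` {x\<in>D. Q x})" unfolding alpha_def Ipart D_def ..
  have s0: "0 < s" using s1 by simp
  have Imset: "mset (partition_of (cnt Q ` {x\<in>D'. Q x})) = replicate_mset c s + mset alpha"
    unfolding D'_def alphaD by (rule rot_Ipart[OF per ab e0 low finD cQ[symmetric] Pb[unfolded P_def] s0])
  have IpartD': "partition_of (cnt Q ` {x\<in>D'. Q x}) = copies_join c [s] alpha"
  proof (rule sorted_desc_unique)
    show "sorted_wrt (\<ge>) (partition_of (cnt Q ` {x\<in>D'. Q x}))"
      using partition_of_is_partition[of "cnt Q ` {x\<in>D'. Q x}"] finD' unfolding is_partition_def by simp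
    show "sorted_wrt (\<ge>) (copies_join c [s] alpha)" unfolding copies_join_def by (simp add: sorted_wrt_rev)
    show "mset (partition_of (cnt Q ` {x\<in>D'. Q x})) = mset (copies_join c [s] alpha)"
      unfolding Imset copies_join_def by simp
  qed
  have injQ: "inj_on (cnt Q) {x. Q x}" by (rule cnt_inj_on)
  have injNQ: "inj_on (cnt NQ) {x. NQ x}" by (rule cnt_inj_on)
  define xi0 where "xi0 = partition_of D'"
  have xi0D: "display n xi0 = D'" unfolding xi0_def using display_partition_of[OF finD'] cardD' by simp
  have xi0P: "is_partition xi0" "length xi0 \<le> n"
    unfolding xi0_def using partition_of_is_partition[OF finD'] partition_of_length[OF finD'] cardD' by auto
  have ex: "uI_partition n I u xi0 \<and> I_part n I xi0 = copies_join c [s] (I_part n I \<nu>) \<and>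
             comp_part n I xi0 = tau_of (e - c) s (comp_part n I \<nu>)"
  proof (intro conjI)
    show "uI_partition n I u xi0" unfolding uI_partition_def using xi0P xi0D cardDI' unfolding Q_def by simp
    show "I_part n I xi0 = copies_join c [s] (I_part n I \<nu>)"
      unfolding Ipart xi0D IpartD' alpha_def ..
    show "comp_part n I xi0 = tau_of (e - c) s (comp_part n I \<nu>)"
      unfolding Cpart[of xi0] xi0D compD' tau_def cb_def lam_def ..
  qed
  have all: "ladder_equiv e (e - c) \<nu> \<xi>"
    if xi: "uI_partition n I u \<xi>" "I_part n I \<xi> = copies_join c [s] (I_part n I \<nu>)"
       "comp_part n I \<xi> = tau_of (e - c) s (comp_part n I \<nu>)" for \<xi>
  proof -
    define Dx where "Dx = display n \<xi>"
    have xiP: "is_partition \<xi>" "length \<xi> \<le> n" using xi(1) unfolding uI_partition_def by auto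
    have fx: "finite Dx" "card {p\<in>Dx. Q p} = u" "card {p\<in>Dx. NQ p} = n - u"
      using uIfacts[OF xi(1)] unfolding Dx_def by auto
    have cQx: "card (cnt Q ` {p\<in>Dx. Q p}) = u"
      using fx(2) card_image[OF inj_on_subset[OF injQ]] by (metis (no_types, lifting) mem_Collect_eq subsetI)
    have cNQx: "card (cnt NQ ` {p\<in>Dx. NQ p}) = n - u"
      using fx(3) card_image[OF inj_on_subset[OF injNQ]] by (metis (no_types, lifting) mem_Collect_eq subsetI)
    have cQ': "card (cnt Q ` {p\<in>D'. Q p}) = u"
      using cardDI' card_image[OF inj_on_subset[OF injQ]] by (metis (no_types, lifting) mem_Collect_eq subsetI)
    have cNQ': "card (cnt NQ ` {p\<in>D'. NQ p}) = n - u"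
      using cardDB' card_image[OF inj_on_subset[OF injNQ]] by (metis (no_types, lifting) mem_Collect_eq subsetI)
    have QQ: "{p\<in>Dx. Q p} = {p\<in>D'. Q p}"
    proof -
    have "cnt Q ` {p\<in>Dx. Q p} = display u (partition_of (cnt Q ` {p\<in>Dx. Q p}))"
      using display_partition_of[of "cnt Q ` {p\<in>Dx. Q p}"] fx(1) cQx by simp
    also have "partition_of (cnt Q ` {p\<in>Dx. Q p}) = partition_of (cnt Q ` {p\<in>D'. Q p})"
      using xi(2) unfolding Ipart Dx_def[symmetric] IpartD' alpha_def .
    also have "display u \<dots> = cnt Q ` {p\<in>D'. Q p}"
      using display_partition_of[of "cnt Q ` {p\<in>D'. Q p}"] finD' cQ' by simp
    finally show "{p\<in>Dx. Q p} = {p\<in>D'. Q p}"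
      using inj_on_image_eq_iff[OF injQ] by (metis (no_types, lifting) mem_Collect_eq subsetI)
    qed
    have NN: "{p\<in>Dx. NQ p} = {p\<in>D'. NQ p}"
    proof -
    have "cnt NQ ` {p\<in>Dx. NQ p} = display (n - u) (partition_of (cnt NQ ` {p\<in>Dx. NQ p}))"
      using display_partition_of[of "cnt NQ ` {p\<in>Dx. NQ p}"] fx(1) cNQx by simp
    also have "partition_of (cnt NQ ` {p\<in>Dx. NQ p}) = partition_of (cnt NQ ` {p\<in>D'. NQ p})"
      using xi(3) unfolding Cpart Dx_def[symmetric] compD' tau_def cb_def lam_def .
    also have "display (n - u) \<dots> = cnt NQ ` {p\<in>D'. NQ p}"
      using display_partition_of[of "cnt NQ ` {p\<in>D'. NQ p}"] finD' cNQ' by simp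
    finally show "{p\<in>Dx. NQ p} = {p\<in>D'. NQ p}"
      using inj_on_image_eq_iff[OF injNQ] by (metis (no_types, lifting) mem_Collect_eq subsetI)
    qed
    have "Dx = D'" using QQ NN unfolding NQ_def by blast
    then have "KB c e (display n \<xi>) = KB c e (display n \<nu>)" unfolding Dx_def D_def[symmetric] using KBeq by simp
    then show ?thesis using ladder_from_KB[OF c0 ce nuP xiP] by simp
  qed
  show ?thesis using ex all by blast
qed


end
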